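(* In the setting described in the context, the left kernel of $\mathbf G$ has dimension equal to the number of vertices of the mesh: $$\dim\ker(\mathbf G^T)=|\mathring{\mathcal V}|+|\mathcal V_\partial|=|\mathcal V|,$$ and a basis of $\ker(\mathbf G^T)$ can be constructed consisting of one vector associated with each vertex of the mesh.
   Context: $\Omega\subset\mathbb{R}^2$ is a bounded, connected, open polygonal domain (possibly with holes) and $\mathcal T$ a conforming triangulation of $\Omega$ with edges $\mathcal E$ and vertices $\mathcal V$, each triangle having at most one edge on $\partial\Omega$. $\mathring{\mathcal E}$ is the set of internal edges (shared by two triangles), $\mathring{\mathcal V}$ the set of internal vertices and $\mathcal V_\partial$ the set of boundary vertices. Every edge is oriented (from $A=(x_A,y_A)$ to $B=(x_B,y_B)$) and all triangles have the same rotation sense; $\delta_T^\Gamma=+1$ if the orientation of the edge $\Gamma\subset\partial T$ agrees with that of $\partial T$, $-1$ otherwise. $\boldsymbol{\Delta}$ is the $|\mathcal T|\times|\mathring{\mathcal E}|$ matrix with entry $\delta_T^\Gamma$ if $\Gamma\in\mathring{\mathcal E}$ is an edge of $T$ and $0$ otherwise. For each internal edge, $a_\Gamma=y_B-y_A$, $b_\Gamma=x_A-x_B$, $c_\Gamma=x_By_A-y_Bx_A$, and $\mathbf a,\mathbf b,\mathbf c$ are the corresponding diagonal $|\mathring{\mathcal E}|\times|\mathring{\mathcal E}|$ matrices. $\mathbf G$ is the $(3|\mathcal T|+|\mathring{\mathcal E}|)\times 3|\mathring{\mathcal E}|$ matrix $$\mathbf G=\begin{pmatrix}\boldsymbol{\Delta}&0&0\\0&\boldsymbol{\Delta}&0\\0&0&\boldsymbol{\Delta}\\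 \mathbf c&\mathbf a&\mathbf b\end{pmatrix}.$$ *)

theory Defs
  imports "HOL-Analysis.Analysis" "HOL-Library.Function_Algebras"
begin

type_synonym pt = "real \<times> real"

text \<open>Bounded connected open polygonal domain (possibly with holes): its boundary is a
  finite union of pairwise disjoint closed Jordan curves (polygonality of the boundary
  is forced by the triangulation below).\<close>
definition polygonal_domain :: "pt set \<Rightarrow> bool" where
  "polygonal_domain \<Omega> \<longleftrightarrow> open \<Omega> \<and> bounded \<Omega> \<and> connected \<Omega> \<and> \<Omega> \<noteq> {} \<and>
     (\<exists>C. finite C \<and> pairwise disjnt C \<and> frontier \<Omega> = \<Union>C \<and>
          (\<forall>c\<in>C. c homeomorphic sphere (0::pt) 1))"

text \<open>A triangle is represented by its set of three (affinely independent) vertices;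
  the geometric triangle is its convex hull.  Conformity: two triangles meet in a common
  face (empty, a common vertex or a common edge).\<close>
definition conforming_triangulation :: "pt set \<Rightarrow> pt set set \<Rightarrow> bool" where
  "conforming_triangulation \<Omega> \<T> \<longleftrightarrow> finite \<T> \<and>
     (\<forall>T\<in>\<T>. card T = 3 \<and> \<not> affine_dependent T) \<and>
     (\<forall>T\<in>\<T>. \<forall>T'\<in>\<T>. convex hull T \<inter> convex hull T' = convex hull (T \<inter> T')) \<and>
     \<Union>((\<lambda>T. convex hull T) ` \<T>) = closure \<Omega>"

definition mesh_vertices :: "pt set set \<Rightarrow> pt set" where
  "mesh_vertices \<T> = \<Union>\<T>"

definition mesh_edges :: "pt set set \<Rightarrow> pt set set" where
  "mesh_edges \<T> = {e. \<exists>T\<in>\<T>. e \<subseteq> T \<and> card e = 2}"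

definition internal_edges :: "pt set set \<Rightarrow> pt set set" where
  "internal_edges \<T> = {e \<in> mesh_edges \<T>. card {T\<in>\<T>. e \<subseteq> T} = 2}"

definition internal_vertices :: "pt set \<Rightarrow> pt set set \<Rightarrow> pt set" where
  "internal_vertices \<Omega> \<T> = mesh_vertices \<T> \<inter> \<Omega>"

definition boundary_vertices :: "pt set \<Rightarrow> pt set set \<Rightarrow> pt set" where
  "boundary_vertices \<Omega> \<T> = mesh_vertices \<T> \<inter> frontier \<Omega>"

definition at_most_one_boundary_edge :: "pt set \<Rightarrow> pt set set \<Rightarrow> bool" where
  "at_most_one_boundary_edge \<Omega> \<T> \<longleftrightarrow>
     (\<forall>T\<in>\<T>. card {e. e \<subseteq> T \<and> card e = 2 \<and> convex hull e \<subseteq> frontier \<Omega>} \<le> 1)"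

text \<open>An orientation of the edges: edge e is oriented from fst (ori e) to snd (ori e).\<close>
definition edge_orientation :: "pt set set \<Rightarrow> (pt set \<Rightarrow> pt \<times> pt) \<Rightarrow> bool" where
  "edge_orientation \<T> ori \<longleftrightarrow> (\<forall>e\<in>mesh_edges \<T>. {fst (ori e), snd (ori e)} = e)"

text \<open>orient2d A B C > 0 iff C lies to the left of the directed line A B.\<close>
definition orient2d :: "pt \<Rightarrow> pt \<Rightarrow> pt \<Rightarrow> real" where
  "orient2d A B C = (fst B - fst A) * (snd C - snd A) - (snd B - snd A) * (fst C - fst A)"

text \<open>delta_T^Gamma: all triangles have the same rotation sense, counterclockwise for
  sigma = 1 and clockwise for sigma = -1.  The oriented edge A B agrees with the
  counterclockwise orientation of the boundary of T iff the third vertex lies to its left.\<close>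
definition delta :: "real \<Rightarrow> (pt set \<Rightarrow> pt \<times> pt) \<Rightarrow> pt set \<Rightarrow> pt set \<Rightarrow> real" where
  "delta \<sigma> ori T e = \<sigma> * sgn (orient2d (fst (ori e)) (snd (ori e)) (the_elem (T - e)))"

definition Delta_mat :: "real \<Rightarrow> (pt set \<Rightarrow> pt \<times> pt) \<Rightarrow> pt set \<Rightarrow> pt set \<Rightarrow> real" where
  "Delta_mat \<sigma> ori T e = (if e \<subseteq> T then delta \<sigma> ori T e else 0)"

definition coef_a :: "(pt set \<Rightarrow> pt \<times> pt) \<Rightarrow> pt set \<Rightarrow> real" where
  "coef_a ori e = snd (snd (ori e)) - snd (fst (ori e))"
definition coef_b :: "(pt set \<Rightarrow> pt \<times> pt) \<Rightarrow> pt set \<Rightarrow> real" where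
  "coef_b ori e = fst (fst (ori e)) - fst (snd (ori e))"
definition coef_c :: "(pt set \<Rightarrow> pt \<times> pt) \<Rightarrow> pt set \<Rightarrow> real" where
  "coef_c ori e = fst (snd (ori e)) * snd (fst (ori e)) - snd (snd (ori e)) * fst (fst (ori e))"

text \<open>Row indices of G: Inl (T,k) is triangle T in block k (k = 0,1,2);
  Inr e is internal edge e in the last block.
  Column indices of G: (e,k) is internal edge e in block k (k = 0,1,2).\<close>
type_synonym row_idx = "(pt set \<times> nat) + pt set"
type_synonym col_idx = "pt set \<times> nat"

definition G_rows :: "pt set set \<Rightarrow> row_idx set" where
  "G_rows \<T> = Inl ` (\<T> \<times> {0,1,2}) \<union> Inr ` internal_edges \<T>"

definition G_cols :: "pt set set \<Rightarrow> col_idx set" where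
  "G_cols \<T> = internal_edges \<T> \<times> {0,1,2}"

definition G_mat :: "real \<Rightarrow> (pt set \<Rightarrow> pt \<times> pt) \<Rightarrow> row_idx \<Rightarrow> col_idx \<Rightarrow> real" where
  "G_mat \<sigma> ori i j = (case i of
      Inl (T, k) \<Rightarrow> (if k = snd j then Delta_mat \<sigma> ori T (fst j) else 0)
    | Inr e' \<Rightarrow> (if e' = fst j then
          (if snd j = 0 then coef_c ori e' else if snd j = 1 then coef_a ori e' else coef_b ori e')
        else 0))"

text \<open>ker(G^T), as a subspace of the real vector space of functions on the row
  indices vanishing outside the row index set.\<close>
definition left_kernel_G :: "pt set set \<Rightarrow> real \<Rightarrow> (pt set \<Rightarrow> pt \<times> pt) \<Rightarrow> (row_idx \<Rightarrow> real) set" where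
  "left_kernel_G \<T> \<sigma> ori = {v. (\<forall>i. i \<notin> G_rows \<T> \<longrightarrow> v i = 0) \<and>
       (\<forall>j\<in>G_cols \<T>. (\<Sum>i\<in>G_rows \<T>. G_mat \<sigma> ori i j * v i) = 0)}"

definition fscale :: "real \<Rightarrow> (row_idx \<Rightarrow> real) \<Rightarrow> (row_idx \<Rightarrow> real)" where
  "fscale r f = (\<lambda>i. r * f i)"

end

theory Submission
  imports Defs "HOL-Complex_Analysis.Contour_Integration"
begin

lemma orient_cyc: "orient2d q s p = orient2d p q s" "orient2d s p q = orient2d p q s"
  by (simp_all add: orient2d_def algebra_simps)

lemma orient_swap: "orient2d q p s = - orient2d p q s"
  by (simp add: orient2d_def algebra_simps)

lemma orient_deg: "orient2d p q p = 0" "orient2d p q q = 0"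
  by (simp_all add: orient2d_def)

lemma orient_affine:
  assumes "u + v + w = 1"
  shows "orient2d a b (u *\<^sub>R p + v *\<^sub>R q + w *\<^sub>R s) = u * orient2d a b p + v * orient2d a b q + w * orient2d a b s"
proof -
  have w: "w = 1 - u - v" using assms by simp
  show ?thesis unfolding w by (simp add: orient2d_def algebra_simps)
qed

lemma hull3_bary:
  assumes D: "orient2d p q s \<noteq> 0"
  shows "x \<in> convex hull {p,q,s} \<longleftrightarrow>
     0 \<le> orient2d q s x / orient2d p q s \<and> 0 \<le> orient2d s p x / orient2d p q s \<and> 0 \<le> orient2d p q x / orient2d p q s"
proof
  assume "x \<in> convex hull {p,q,s}"
  then obtain u v w where uvw: "0 \<le> u" "0 \<le> v" "0 \<le> w" "u+v+w = 1" and x: "x = u *\<^sub>R p + v *\<^sub>R q + w *\<^sub>R s"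
    unfolding convex_hull_3 by blast
  have 1: "orient2d q s x = u * orient2d p q s" unfolding x orient_affine[OF uvw(4)]
    by (simp add: orient_deg orient_cyc)
  have 2: "orient2d s p x = v * orient2d p q s" unfolding x orient_affine[OF uvw(4)]
    by (simp add: orient_deg orient_cyc)
  have 3: "orient2d p q x = w * orient2d p q s" unfolding x orient_affine[OF uvw(4)]
    by (simp add: orient_deg orient_cyc)
  show "0 \<le> orient2d q s x / orient2d p q s \<and> 0 \<le> orient2d s p x / orient2d p q s \<and> 0 \<le> orient2d p q x / orient2d p q s"
    using D uvw by (simp add: 1 2 3)
next
  assume H: "0 \<le> orient2d q s x / orient2d p q s \<and> 0 \<le> orient2d s p x / orient2d p q s \<and> 0 \<le> orient2d p q x / orient2d p q s"
  define u where "u = orient2d q s x / orient2d p q s"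
  define v where "v = orient2d s p x / orient2d p q s"
  define w where "w = orient2d p q x / orient2d p q s"
  have s1: "u + v + w = 1" unfolding u_def v_def w_def using D
    by (simp add: divide_simps) (simp add: orient2d_def algebra_simps)
  have id: "orient2d q s x *\<^sub>R p + orient2d s p x *\<^sub>R q + orient2d p q x *\<^sub>R s = orient2d p q s *\<^sub>R x"
    by (cases p; cases q; cases s; cases x) (simp add: orient2d_def algebra_simps)
  have x: "x = u *\<^sub>R p + v *\<^sub>R q + w *\<^sub>R s" unfolding u_def v_def w_def
  proof -
    have "x = (1 / orient2d p q s) *\<^sub>R (orient2d p q s *\<^sub>R x)" using D by simp
    also have "\<dots> = (orient2d q s x / orient2d p q s) *\<^sub>R p + (orient2d s p x / orient2d p q s) *\<^sub>R q + (orient2d p q x / orient2d p q s) *\<^sub>R s"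
      unfolding id[symmetric] by (simp add: scaleR_add_right)
    finally show "x = (orient2d q s x / orient2d p q s) *\<^sub>R p + (orient2d s p x / orient2d p q s) *\<^sub>R q + (orient2d p q x / orient2d p q s) *\<^sub>R s" .
  qed
  show "x \<in> convex hull {p,q,s}" unfolding convex_hull_3 using H s1 x
    unfolding u_def[symmetric] v_def[symmetric] w_def[symmetric] by blast
qed


lemma collinear_witness:
  assumes "p \<noteq> q" "orient2d p q s = 0"
  shows "\<exists>t. s = (1 - t) *\<^sub>R p + t *\<^sub>R q"
proof (cases "fst q = fst p")
  case False
  define t where "t = (fst s - fst p) / (fst q - fst p)"
  have d: "fst q - fst p \<noteq> 0" using False by simp
  have e: "(fst q - fst p) * (snd s - snd p) = (snd q - snd p) * (fst s - fst p)"
    using assms(2) by (simp add: orient2d_def)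
  have 1: "fst s = (1 - t) * fst p + t * fst q"
  proof -
    have "(1 - t) * fst p + t * fst q = fst p + t * (fst q - fst p)" by (simp add: algebra_simps)
    also have "\<dots> = fst s" unfolding t_def using d by simp
    finally show ?thesis by simp
  qed
  have 2: "snd s = (1 - t) * snd p + t * snd q"
  proof -
    have "(1 - t) * snd p + t * snd q = snd p + t * (snd q - snd p)" by (simp add: algebra_simps)
    also have "t * (snd q - snd p) = (snd q - snd p) * (fst s - fst p) / (fst q - fst p)"
      unfolding t_def by simp
    also have "\<dots> = snd s - snd p" unfolding e[symmetric] using d by simp
    finally show ?thesis by simp
  qed
  have "s = (1 - t) *\<^sub>R p + t *\<^sub>R q" using 1 2 by (simp add: prod_eq_iff)
  then show ?thesis by blast
next
  case True
  then have ne: "snd q \<noteq> snd p" using assms(1) by (simp add: prod_eq_iff)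
  define t where "t = (snd s - snd p) / (snd q - snd p)"
  have d: "snd q - snd p \<noteq> 0" using ne by simp
  have e: "(fst q - fst p) * (snd s - snd p) = (snd q - snd p) * (fst s - fst p)"
    using assms(2) by (simp add: orient2d_def)
  have 2: "snd s = (1 - t) * snd p + t * snd q"
  proof -
    have "(1 - t) * snd p + t * snd q = snd p + t * (snd q - snd p)" by (simp add: algebra_simps)
    also have "\<dots> = snd s" unfolding t_def using d by simp
    finally show ?thesis by simp
  qed
  have 1: "fst s = (1 - t) * fst p + t * fst q"
  proof -
    have "(snd q - snd p) * (fst s - fst p) = 0" using e True by simp
    then have "fst s = fst p" using d by simp
    then show ?thesis using True by (simp add: algebra_simps)
  qed
  have "s = (1 - t) *\<^sub>R p + t *\<^sub>R q" using 1 2 by (simp add: prod_eq_iff)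
  then show ?thesis by blast
qed

lemma indep_orient:
  assumes "p \<noteq> q" "p \<noteq> s" "q \<noteq> s" "\<not> affine_dependent {p,q,s}"
  shows "orient2d p q s \<noteq> 0"
proof
  assume o: "orient2d p q s = 0"
  obtain t where t: "s = (1 - t) *\<^sub>R p + t *\<^sub>R q" using collinear_witness[OF assms(1) o] by blast
  have "{p,q,s} - {s} = {p,q}" using assms by auto
  moreover have "s \<in> affine hull {p,q}" unfolding affine_hull_2 using t by force
  ultimately have "affine_dependent {p,q,s}" unfolding affine_dependent_def by force
  then show False using assms(4) by blast
qed


lemma small_step:
  fixes m d :: pt
  assumes "open V" "m \<in> V"
  shows "\<exists>\<epsilon>>0. \<epsilon> < 1 \<and> m + \<epsilon> *\<^sub>R d \<in> V"
proof -
  obtain r where r: "r > 0" "ball m r \<subseteq> V" using assms open_contains_ball by blast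
  define \<epsilon> where "\<epsilon> = min (1/2) (r / (2 * (norm d + 1)))"
  have "0 < 2 * (norm d + 1)" by (smt (verit) norm_ge_zero)
  then have e0: "\<epsilon> > 0" unfolding \<epsilon>_def using r by simp
  have "norm (\<epsilon> *\<^sub>R d) = \<epsilon> * norm d" using e0 by simp
  also have "\<dots> \<le> (r / (2 * (norm d + 1))) * norm d"
    by (rule mult_right_mono) (auto simp: \<epsilon>_def)
  also have "\<dots> < r"
  proof -
    have "(r / (2 * (norm d + 1))) * norm d = r * (norm d / (2 * (norm d + 1)))" by simp
    also have "norm d / (2 * (norm d + 1)) < 1"
    proof -
      have h: "0 < 2 * (norm d + 1)" "norm d < 2 * (norm d + 1)" by (smt (verit) norm_ge_zero)+
      then show ?thesis using divide_less_eq_1_pos by blast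
    qed
    then have "r * (norm d / (2 * (norm d + 1))) < r * 1"
      using r(1) by (intro mult_strict_left_mono) auto
    finally show ?thesis by simp
  qed
  finally have "m + \<epsilon> *\<^sub>R d \<in> ball m r" by (simp add: dist_norm)
  then show ?thesis using r e0 by (intro exI[of _ \<epsilon>]) (auto simp: \<epsilon>_def)
qed

lemma continuous_orient[continuous_intros]: "continuous_on S (\<lambda>x. orient2d a b x)"
  unfolding orient2d_def by (intro continuous_intros)

locale mesh =
  fixes \<Omega> :: "pt set" and \<T> :: "pt set set" and ori :: "pt set \<Rightarrow> pt \<times> pt" and \<sigma> :: real
  assumes dom: "polygonal_domain \<Omega>" and tri: "conforming_triangulation \<Omega> \<T>"
    and oriok: "edge_orientation \<T> ori" and sig: "\<sigma> = 1 \<or> \<sigma> = -1"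
begin

lemma fin: "finite \<T>" using tri unfolding conforming_triangulation_def by blast
lemma card3: "T \<in> \<T> \<Longrightarrow> card T = 3" using tri unfolding conforming_triangulation_def by blast
lemma indep: "T \<in> \<T> \<Longrightarrow> \<not> affine_dependent T" using tri unfolding conforming_triangulation_def by blast
lemma conf: "T \<in> \<T> \<Longrightarrow> T' \<in> \<T> \<Longrightarrow> convex hull T \<inter> convex hull T' = convex hull (T \<inter> T')"
  using tri unfolding conforming_triangulation_def by blast
lemma cover: "\<Union>((\<lambda>T. convex hull T) ` \<T>) = closure \<Omega>"
  using tri unfolding conforming_triangulation_def by blast
lemma fin_tri: "T \<in> \<T> \<Longrightarrow> finite T" using card3 by (metis card.infinite zero_neq_numeral)

lemma orient_ne:
  assumes "T \<in> \<T>" "T = {p,q,s}" "p \<noteq> q" "p \<noteq> s" "q \<noteq> s"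
  shows "orient2d p q s \<noteq> 0"
  using indep_orient[OF assms(3-5)] indep[OF assms(1)] assms(2) by simp

lemma tri_enum:
  assumes "T \<in> \<T>" "x \<in> T"
  shows "\<exists>q s. T = {x,q,s} \<and> x \<noteq> q \<and> x \<noteq> s \<and> q \<noteq> s \<and> orient2d x q s \<noteq> 0"
proof -
  obtain a b c where abc: "T = {a,b,c}" "a \<noteq> b" "a \<noteq> c" "b \<noteq> c"
    using card3[OF assms(1)] card_3_iff by metis
  have "\<exists>q s. T = {x,q,s} \<and> x \<noteq> q \<and> x \<noteq> s \<and> q \<noteq> s"
  proof -
    have "x = a \<or> x = b \<or> x = c" using assms(2) abc by blast
    moreover have "x = a \<Longrightarrow> ?thesis" using abc by blast
    moreover have "x = b \<Longrightarrow> ?thesis" using abc by (intro exI[of _ a] exI[of _ c]) auto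
    moreover have "x = c \<Longrightarrow> ?thesis" using abc by (intro exI[of _ a] exI[of _ b]) auto
    ultimately show ?thesis by blast
  qed
  then obtain q s where "T = {x,q,s}" "x \<noteq> q" "x \<noteq> s" "q \<noteq> s" by blast
  then show ?thesis using orient_ne[OF assms(1)] by blast
qed

lemma vert_in_hull:
  assumes "T \<in> \<T>" "T' \<in> \<T>" "x \<in> T'" "x \<in> convex hull T"
  shows "x \<in> T"
proof (rule ccontr)
  assume "x \<notin> T"
  have "x \<in> convex hull (T \<inter> T')" using conf[OF assms(1,2)] assms(3,4) hull_inc[of x T'] by blast
  moreover have "T \<inter> T' \<subseteq> T' - {x}" using \<open>x \<notin> T\<close> by blast
  ultimately have "x \<in> convex hull (T' - {x})" using hull_mono by blast
  then have "x \<in> affine hull (T' - {x})" using convex_hull_subset_affine_hull by blast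
  then have "affine_dependent T'" unfolding affine_dependent_def using assms(3) by blast
  then show False using indep[OF assms(2)] by blast
qed

lemma hull2_orient: "y \<in> convex hull {p,q} \<Longrightarrow> orient2d p q y = 0"
proof -
  assume "y \<in> convex hull {p,q}"
  then have "y \<in> affine hull {p,q}" using convex_hull_subset_affine_hull by blast
  then obtain u v where "u + v = 1" "y = u *\<^sub>R p + v *\<^sub>R q" unfolding affine_hull_2 by blast
  then show ?thesis using orient_affine[of u v 0 p q p q q] by (simp add: orient_deg)
qed

lemma opp_sides:
  assumes T: "{p,q,s} \<in> \<T>" and T': "{p,q,s'} \<in> \<T>"
    and d: "p \<noteq> q" "p \<noteq> s" "q \<noteq> s" "p \<noteq> s'" "q \<noteq> s'" "s \<noteq> s'"
  shows "orient2d p q s * orient2d p q s' < 0"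
proof (rule ccontr)
  assume neg: "\<not> orient2d p q s * orient2d p q s' < 0"
  define o1 where "o1 = orient2d p q s"
  define o2 where "o2 = orient2d p q s'"
  have o1: "o1 \<noteq> 0" unfolding o1_def using orient_ne[OF T refl] d by blast
  have o2: "o2 \<noteq> 0" unfolding o2_def using orient_ne[OF T' refl] d by blast
  have pos: "o1 * o2 > 0" using neg o1 o2 unfolding o1_def o2_def
    by (metis linorder_neqE_linordered_idom mult_eq_0_iff not_less)
  define m where "m = (1/2) *\<^sub>R p + (1/2) *\<^sub>R q + 0 *\<^sub>R s"
  define V where "V = {y. 0 < orient2d q s y / o1} \<inter> {y. 0 < orient2d s p y / o1}
     \<inter> {y. 0 < orient2d q s' y / o2} \<inter> {y. 0 < orient2d s' p y / o2}"
  have "open V" unfolding V_def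
    by (intro open_Int open_Collect_less continuous_intros) (auto simp: o1 o2)
  have om: "orient2d a b m = (1/2) * orient2d a b p + (1/2) * orient2d a b q" for a b
    unfolding m_def by (subst orient_affine) auto
  have "m \<in> V" unfolding V_def using o1 o2
    by (simp add: om orient_deg o1_def o2_def orient_cyc(1)[of q s p] orient_cyc(2)[of s p q] orient_cyc(1)[of q s' p] orient_cyc(2)[of s' p q])
  obtain \<epsilon> where e: "\<epsilon> > 0" "\<epsilon> < 1" "m + \<epsilon> *\<^sub>R (s - m) \<in> V"
    using small_step[OF \<open>open V\<close> \<open>m \<in> V\<close>] by blast
  define y where "y = ((1 - \<epsilon>)/2) *\<^sub>R p + ((1 - \<epsilon>)/2) *\<^sub>R q + \<epsilon> *\<^sub>R s"
  have ym: "m + \<epsilon> *\<^sub>R (s - m) = y" unfolding y_def m_def by (simp add: prod_eq_iff field_simps)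
  have oy: "orient2d a b y = ((1 - \<epsilon>)/2) * orient2d a b p + ((1 - \<epsilon>)/2) * orient2d a b q + \<epsilon> * orient2d a b s" for a b
    unfolding y_def by (subst orient_affine) (auto simp: field_simps)
  have pq: "orient2d p q y = \<epsilon> * o1" by (simp add: oy orient_deg o1_def)
  have yV: "y \<in> V" using e ym by simp
  have "y \<in> convex hull {p,q,s}"
    unfolding hull3_bary[OF o1[unfolded o1_def]]
    using yV e o1 unfolding V_def by (simp add: pq o1_def)
  moreover have "y \<in> convex hull {p,q,s'}"
  proof -
    have "0 < \<epsilon> * (o1 * o2)" using pos e by simp
    then have "0 < orient2d p q y / o2" unfolding pq
      by (auto simp: zero_less_divide_iff zero_less_mult_iff mult_less_0_iff)
    then show ?thesis
      unfolding hull3_bary[OF o2[unfolded o2_def]]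
      using yV unfolding V_def by (simp add: o2_def)
  qed
  ultimately have "y \<in> convex hull ({p,q,s} \<inter> {p,q,s'})" using conf[OF T T'] by blast
  moreover have "{p,q,s} \<inter> {p,q,s'} = {p,q}" using d by auto
  ultimately have "orient2d p q y = 0" using hull2_orient by simp
  then show False using pq e o1 by simp
qed

end

lemma sp_inj:
  assumes "simple_path g" "x \<in> {0..1}" "y \<in> {0..1}" "g x = g y" "x \<noteq> 0" "x \<noteq> 1"
  shows "x = y"
  using assms unfolding simple_path_def loop_free_def by blast

lemma leg_interval:
  fixes g :: "real \<Rightarrow> pt"
  assumes sp: "simple_path g" and lp: "pathfinish g = pathstart g" and st: "pathstart g = p"
    and c: "path_image g = c"
    and L: "L \<subseteq> c - {p}" "convex L"
    and t: "0 < t1" "t1 \<le> s" "s \<le> t2" "t2 < 1" "g t1 \<in> L" "g t2 \<in> L"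
  shows "g s \<in> L"
proof -
  have g0: "g 0 = p" and g1: "g 1 = p" using st lp unfolding pathstart_def pathfinish_def by auto
  define K where "K = closed_segment (g t1) (g t2)"
  have KL: "K \<subseteq> L" unfolding K_def using L t by (intro closed_segment_subset) auto
  define D where "D = {0..1} \<inter> g -` K"
  have cont: "continuous_on {0..1} g" using sp unfolding simple_path_def path_def by blast
  have "closed D" unfolding D_def
    by (rule continuous_closed_preimage[OF cont]) (auto simp: K_def)
  moreover have "bounded D" unfolding D_def by (rule bounded_subset[of "{0..1::real}"]) auto
  ultimately have cD: "compact D" using compact_eq_bounded_closed by blast
  have D01: "t \<noteq> 0 \<and> t \<noteq> 1" if "t \<in> D" for t
  proof -
    have "g t \<in> K" using that unfolding D_def by blast
    then have "g t \<noteq> p" using KL L(1) by blast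
    then show ?thesis using g0 g1 by metis
  qed
  have inj: "inj_on g D"
  proof
    fix x y assume "x \<in> D" "y \<in> D" "g x = g y"
    then have "x \<in> {0..1}" "y \<in> {0..1}" unfolding D_def by blast+
    then show "x = y" using sp_inj[OF sp _ _ \<open>g x = g y\<close>] D01[OF \<open>x \<in> D\<close>] by blast
  qed
  define h where "h = inv_into D g"
  have hg: "\<forall>x\<in>D. h (g x) = x" unfolding h_def using inj by auto
  have cgD: "continuous_on D g" using cont unfolding D_def by (rule continuous_on_subset) auto
  have "g ` D = K"
  proof
    show "g ` D \<subseteq> K" unfolding D_def by auto
    show "K \<subseteq> g ` D"
    proof
      fix z assume "z \<in> K"
      then have "z \<in> c" using KL L by auto
      then obtain t where "t \<in> {0..1}" "z = g t" using c unfolding path_image_def by auto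
      then show "z \<in> g ` D" unfolding D_def using \<open>z \<in> K\<close> by auto
    qed
  qed
  have ch: "continuous_on K h" using continuous_on_inv[OF cgD cD hg] \<open>g ` D = K\<close> by simp
  have "connected (h ` K)" unfolding K_def
    by (rule connected_continuous_image[OF ch[unfolded K_def]]) simp
  moreover have t1D: "t1 \<in> D" "t2 \<in> D" unfolding D_def K_def using t by auto
  moreover have "t1 \<in> h ` K" "t2 \<in> h ` K"
    using hg t1D \<open>g ` D = K\<close> by (metis image_eqI)+
  ultimately have "{t1..t2} \<subseteq> h ` K" by (intro connected_contains_Icc) auto
  then have "s \<in> h ` K" using t by auto
  moreover have "h ` K \<subseteq> D" unfolding h_def using \<open>g ` D = K\<close> by (auto intro: inv_into_into)
  ultimately have "s \<in> D" by blast
  then show ?thesis using KL unfolding D_def by auto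
qed

lemma leg_side:
  fixes g :: "real \<Rightarrow> pt"
  assumes sp: "simple_path g" and lp: "pathfinish g = pathstart g" and st: "pathstart g = p"
    and c: "path_image g = c"
    and L: "L \<subseteq> c - {p}" and pc: "p \<in> closure L"
  shows "(\<forall>\<epsilon>>0. \<exists>t. 0 < t \<and> t < \<epsilon> \<and> t < 1 \<and> g t \<in> L) \<or> (\<forall>\<epsilon>>0. \<exists>t. 0 < t \<and> 1 - \<epsilon> < t \<and> t < 1 \<and> g t \<in> L)"
proof (rule ccontr)
  assume "\<not> ?thesis"
  then obtain e1 e2 where e: "e1 > 0" "e2 > 0"
    and h1: "\<And>t. 0 < t \<Longrightarrow> t < 1 \<Longrightarrow> g t \<in> L \<Longrightarrow> e1 \<le> t"
    and h2: "\<And>t. 0 < t \<Longrightarrow> t < 1 \<Longrightarrow> g t \<in> L \<Longrightarrow> t \<le> 1 - e2"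
    by (metis not_le)
  have g0: "g 0 = p" and g1: "g 1 = p" using st lp unfolding pathstart_def pathfinish_def by auto
  have cont: "continuous_on {0..1} g" using sp unfolding simple_path_def path_def by blast
  define K where "K = g ` {e1..1-e2}"
  have LK: "L \<subseteq> K"
  proof
    fix x assume "x \<in> L"
    then have "x \<in> c" "x \<noteq> p" using L by auto
    then obtain t where t: "t \<in> {0..1}" "x = g t" using c unfolding path_image_def by auto
    then have "t \<noteq> 0" "t \<noteq> 1" using \<open>x \<noteq> p\<close> g0 g1 by auto
    then have "0 < t" "t < 1" using t by auto
    then show "x \<in> K" unfolding K_def using h1 h2 \<open>x \<in> L\<close> t by auto
  qed
  have "compact K" unfolding K_def
    by (intro compact_continuous_image continuous_on_subset[OF cont]) (use e in auto)
  then have "closure L \<subseteq> K" using LK closure_minimal compact_imp_closed by blast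
  then have "p \<in> K" using pc by blast
  then obtain t where t: "t \<in> {e1..1-e2}" "g t = p" unfolding K_def by auto
  then have "t \<in> {0..1}" using e by auto
  from sp_inj[OF sp this, of 0] t g0 e show False by auto
qed

lemma legs_meet:
  fixes g :: "real \<Rightarrow> pt"
  assumes sp: "simple_path g" and lp: "pathfinish g = pathstart g" and st: "pathstart g = p"
    and c: "path_image g = c"
    and L1: "L1 \<subseteq> c - {p}" "convex L1" and L2: "L2 \<subseteq> c - {p}" "convex L2"
    and s: "(\<forall>\<epsilon>>0. \<exists>t. 0 < t \<and> t < \<epsilon> \<and> t < 1 \<and> g t \<in> L1) \<and> (\<forall>\<epsilon>>0. \<exists>t. 0 < t \<and> t < \<epsilon> \<and> t < 1 \<and> g t \<in> L2)
      \<or> (\<forall>\<epsilon>>0. \<exists>t. 0 < t \<and> 1 - \<epsilon> < t \<and> t < 1 \<and> g t \<in> L1) \<and> (\<forall>\<epsilon>>0. \<exists>t. 0 < t \<and> 1 - \<epsilon> < t \<and> t < 1 \<and> g t \<in> L2)"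
  shows "L1 \<inter> L2 \<noteq> {}"
  using s
proof
  assume a: "(\<forall>\<epsilon>>0. \<exists>t. 0 < t \<and> t < \<epsilon> \<and> t < 1 \<and> g t \<in> L1) \<and> (\<forall>\<epsilon>>0. \<exists>t. 0 < t \<and> t < \<epsilon> \<and> t < 1 \<and> g t \<in> L2)"
  obtain t1 where t1: "0 < t1" "t1 < 1" "g t1 \<in> L1" using a by (meson zero_less_one)
  obtain t2 where t2: "0 < t2" "t2 < t1" "g t2 \<in> L2" using a t1 by blast
  obtain t3 where t3: "0 < t3" "t3 < t2" "g t3 \<in> L1" using a t2 by blast
  have "g t2 \<in> L1" using leg_interval[OF sp lp st c L1, of t3 t2 t1] t1 t2 t3 by auto
  then show ?thesis using t2 by blast
next
  assume a: "(\<forall>\<epsilon>>0. \<exists>t. 0 < t \<and> 1 - \<epsilon> < t \<and> t < 1 \<and> g t \<in> L1) \<and> (\<forall>\<epsilon>>0. \<exists>t. 0 < t \<and> 1 - \<epsilon> < t \<and> t < 1 \<and> g t \<in> L2)"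
  obtain t1 where t1: "0 < t1" "t1 < 1" "g t1 \<in> L1" using a by (meson zero_less_one)
  obtain t2 where t2: "t1 < t2" "t2 < 1" "g t2 \<in> L2" using a[THEN conjunct2, rule_format, of "1 - t1"] t1 by auto
  obtain t3 where t3: "t2 < t3" "t3 < 1" "g t3 \<in> L1" using a[THEN conjunct1, rule_format, of "1 - t2"] t2 by auto
  have "g t2 \<in> L1" using leg_interval[OF sp lp st c L1, of t1 t2 t3] t1 t2 t3 by auto
  then show ?thesis using t2 by blast
qed

lemma jordan_path:
  fixes c :: "pt set"
  assumes "c homeomorphic sphere (0::pt) 1" "p \<in> c"
  shows "\<exists>g. simple_path g \<and> pathfinish g = pathstart g \<and> pathstart g = p \<and> path_image g = c"
proof -
  have "sphere (0::complex) 1 homeomorphic sphere (0::pt) 1"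
    by (rule homeomorphic_spheres_gen) auto
  then have "sphere (0::complex) 1 homeomorphic c" using assms(1) homeomorphic_sym homeomorphic_trans by blast
  then obtain h k where hk: "homeomorphism (sphere (0::complex) 1) c h k" unfolding homeomorphic_def by blast
  define g0 where "g0 = h \<circ> circlepath 0 1"
  have pi: "path_image (circlepath (0::complex) 1) = sphere 0 1" by simp
  have "simple_path g0" unfolding g0_def
  proof (rule simple_path_continuous_image)
    show "simple_path (circlepath (0::complex) 1)" by (simp add: simple_path_circlepath)
    show "continuous_on (path_image (circlepath 0 1)) h" unfolding pi using hk unfolding homeomorphism_def by (elim conjE)
    show "inj_on h (path_image (circlepath 0 1))" unfolding pi using hk
      by (metis homeomorphism_def inj_on_inverseI)
  qed
  have lp0: "pathfinish g0 = pathstart g0" unfolding g0_def pathfinish_def pathstart_def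
    using pathfinish_circlepath[of 0 1] pathstart_circlepath[of 0 1]
    unfolding pathfinish_def pathstart_def by simp
  have hS: "h ` sphere 0 1 = c" using hk unfolding homeomorphism_def by (elim conjE)
  have im0: "path_image g0 = c" unfolding g0_def path_image_compose pi hS ..
  obtain a where a: "a \<in> {0..1}" "g0 a = p" using assms(2) im0 unfolding path_image_def by auto
  have a0: "0 \<le> a" and a1: "a \<le> 1" using a(1) by auto
  define g where "g = shiftpath a g0"
  have f1: "simple_path g" unfolding g_def by (rule simple_path_shiftpath[OF \<open>simple_path g0\<close> lp0 a0 a1])
  have f2: "pathstart g = p" unfolding g_def pathstart_shiftpath[OF a1] by (rule a(2))
  have f3: "pathfinish g = pathstart g" unfolding g_def pathstart_shiftpath[OF a1] pathfinish_shiftpath[OF a0 lp0] ..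
  have f4: "path_image g = c" unfolding g_def path_image_shiftpath[OF a(1) lp0] by (rule im0)
  show ?thesis by (rule exI[of _ g]) (intro conjI f1 f2 f3 f4)
qed

lemma no_triod:
  fixes c :: "pt set"
  assumes "c homeomorphic sphere (0::pt) 1" "p \<in> c"
    and L1: "L1 \<subseteq> c - {p}" "convex L1" "p \<in> closure L1"
    and L2: "L2 \<subseteq> c - {p}" "convex L2" "p \<in> closure L2"
    and L3: "L3 \<subseteq> c - {p}" "convex L3" "p \<in> closure L3"
    and d: "L1 \<inter> L2 = {}" "L1 \<inter> L3 = {}" "L2 \<inter> L3 = {}"
  shows False
proof -
  obtain g where g: "simple_path g" "pathfinish g = pathstart g" "pathstart g = p" "path_image g = c"
    using jordan_path[OF assms(1,2)] by blast
  define lows where "lows L = (\<forall>\<epsilon>>0. \<exists>t. 0 < t \<and> t < \<epsilon> \<and> t < 1 \<and> g t \<in> L)" for L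
  define highs where "highs L = (\<forall>\<epsilon>>0. \<exists>t. 0 < t \<and> 1 - \<epsilon> < t \<and> t < 1 \<and> g t \<in> L)" for L
  have s1: "lows L1 \<or> highs L1" unfolding lows_def highs_def by (rule leg_side[OF g L1(1) L1(3)])
  have s2: "lows L2 \<or> highs L2" unfolding lows_def highs_def by (rule leg_side[OF g L2(1) L2(3)])
  have s3: "lows L3 \<or> highs L3" unfolding lows_def highs_def by (rule leg_side[OF g L3(1) L3(3)])
  have m12: "lows L1 \<and> lows L2 \<or> highs L1 \<and> highs L2 \<Longrightarrow> L1 \<inter> L2 \<noteq> {}"
    unfolding lows_def highs_def by (rule legs_meet[OF g L1(1,2) L2(1,2)])
  have m13: "lows L1 \<and> lows L3 \<or> highs L1 \<and> highs L3 \<Longrightarrow> L1 \<inter> L3 \<noteq> {}"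
    unfolding lows_def highs_def by (rule legs_meet[OF g L1(1,2) L3(1,2)])
  have m23: "lows L2 \<and> lows L3 \<or> highs L2 \<and> highs L3 \<Longrightarrow> L2 \<inter> L3 \<noteq> {}"
    unfolding lows_def highs_def by (rule legs_meet[OF g L2(1,2) L3(1,2)])
  have n12: "\<not> (lows L1 \<and> lows L2 \<or> highs L1 \<and> highs L2)" using m12 d(1) by metis
  have n13: "\<not> (lows L1 \<and> lows L3 \<or> highs L1 \<and> highs L3)" using m13 d(2) by metis
  have n23: "\<not> (lows L2 \<and> lows L3 \<or> highs L2 \<and> highs L3)" using m23 d(3) by metis
  show False using s1 s2 s3 n12 n13 n23 by argo
qed


lemma bary_sum: "orient2d p q s \<noteq> 0 \<Longrightarrow> orient2d q s x / orient2d p q s + orient2d s p x / orient2d p q s + orient2d p q x / orient2d p q s = 1"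
  by (simp add: divide_simps) (simp add: orient2d_def algebra_simps)

lemma bary_rec: "orient2d p q s \<noteq> 0 \<Longrightarrow> x = (orient2d q s x / orient2d p q s) *\<^sub>R p + (orient2d s p x / orient2d p q s) *\<^sub>R q + (orient2d p q x / orient2d p q s) *\<^sub>R s"
proof -
  assume D: "orient2d p q s \<noteq> 0"
  have id: "orient2d q s x *\<^sub>R p + orient2d s p x *\<^sub>R q + orient2d p q x *\<^sub>R s = orient2d p q s *\<^sub>R x"
    by (cases p; cases q; cases s; cases x) (simp add: orient2d_def algebra_simps)
  have "x = (1 / orient2d p q s) *\<^sub>R (orient2d p q s *\<^sub>R x)" using D by simp
  also have "\<dots> = (orient2d q s x / orient2d p q s) *\<^sub>R p + (orient2d s p x / orient2d p q s) *\<^sub>R q + (orient2d p q x / orient2d p q s) *\<^sub>R s"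
    unfolding id[symmetric] by (simp add: scaleR_add_right)
  finally show ?thesis .
qed

context mesh
begin

lemma omega_open: "open \<Omega>" using dom unfolding polygonal_domain_def by blast

lemma third_vertex:
  assumes "T \<in> \<T>" "p \<in> T" "q \<in> T" "p \<noteq> q"
  shows "\<exists>s. T = {p,q,s} \<and> s \<noteq> p \<and> s \<noteq> q \<and> orient2d p q s \<noteq> 0"
proof -
  obtain a b where ab: "T = {p,a,b}" "p \<noteq> a" "p \<noteq> b" "a \<noteq> b" "orient2d p a b \<noteq> 0"
    using tri_enum[OF assms(1,2)] by blast
  have "q = a \<or> q = b" using assms(3,4) ab(1) by blast
  then show ?thesis
  proof
    assume "q = a" then show ?thesis using ab by blast
  next
    assume qb: "q = b"
    have "T = {p,q,a}" using ab(1) qb by blast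
    moreover have "orient2d p q a \<noteq> 0" using orient_ne[OF assms(1) \<open>T = {p,q,a}\<close>] ab qb by blast
    ultimately show ?thesis using ab qb by blast
  qed
qed

lemma at_most_two:
  assumes pq: "p \<noteq> q" and T: "T1 \<in> \<T>" "T2 \<in> \<T>" "T3 \<in> \<T>"
    and m: "p \<in> T1" "q \<in> T1" "p \<in> T2" "q \<in> T2" "p \<in> T3" "q \<in> T3"
    and d: "T1 \<noteq> T2" "T1 \<noteq> T3" "T2 \<noteq> T3"
  shows False
proof -
  obtain s1 where s1: "T1 = {p,q,s1}" "s1 \<noteq> p" "s1 \<noteq> q" using third_vertex[OF T(1) m(1,2) pq] by blast
  obtain s2 where s2: "T2 = {p,q,s2}" "s2 \<noteq> p" "s2 \<noteq> q" using third_vertex[OF T(2) m(3,4) pq] by blast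
  obtain s3 where s3: "T3 = {p,q,s3}" "s3 \<noteq> p" "s3 \<noteq> q" using third_vertex[OF T(3) m(5,6) pq] by blast
  have "s1 \<noteq> s2" using s1(1) s2(1) d(1) by blast
  have "s1 \<noteq> s3" using s1(1) s3(1) d(2) by blast
  have "s2 \<noteq> s3" using s2(1) s3(1) d(3) by blast
  have T1': "{p,q,s1} \<in> \<T>" and T2': "{p,q,s2} \<in> \<T>" and T3': "{p,q,s3} \<in> \<T>"
    using T s1(1) s2(1) s3(1) by simp_all
  have a: "orient2d p q s1 * orient2d p q s2 < 0"
    by (rule opp_sides[OF T1' T2']) (use s1 s2 pq \<open>s1 \<noteq> s2\<close> in auto)
  have b: "orient2d p q s1 * orient2d p q s3 < 0"
    by (rule opp_sides[OF T1' T3']) (use s1 s3 pq \<open>s1 \<noteq> s3\<close> in auto)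
  have c: "orient2d p q s2 * orient2d p q s3 < 0"
    by (rule opp_sides[OF T2' T3']) (use s2 s3 pq \<open>s2 \<noteq> s3\<close> in auto)
  show False using a b c by (auto simp: mult_less_0_iff)
qed

lemma card_le2:
  assumes "p \<noteq> q"
  shows "card {T\<in>\<T>. p \<in> T \<and> q \<in> T} \<le> 2"
proof (rule ccontr)
  assume "\<not> ?thesis"
  then have "3 \<le> card {T\<in>\<T>. p \<in> T \<and> q \<in> T}" by simp
  then obtain X where X: "X \<subseteq> {T\<in>\<T>. p \<in> T \<and> q \<in> T}" "card X = 3" "finite X" by (rule obtain_subset_with_card_n)
  from X(2) obtain T1 T2 T3 where "X = {T1,T2,T3}" "T1 \<noteq> T2" "T1 \<noteq> T3" "T2 \<noteq> T3" unfolding card_3_iff by blast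
  then show False using at_most_two[OF assms, of T1 T2 T3] X(1) by blast
qed

lemma edge_set_eq: "{T\<in>\<T>. {p,q} \<subseteq> T} = {T\<in>\<T>. p \<in> T \<and> q \<in> T}" by auto

lemma internal_edge_I:
  assumes T: "T \<in> \<T>" "T' \<in> \<T>" "T \<noteq> T'" and m: "p \<in> T" "q \<in> T" "p \<in> T'" "q \<in> T'" and pq: "p \<noteq> q"
  shows "{p,q} \<in> internal_edges \<T>" "{T\<in>\<T>. {p,q} \<subseteq> T} = {T,T'}"
proof -
  have fin2: "finite {T\<in>\<T>. p \<in> T \<and> q \<in> T}" using fin by simp
  have sub: "{T,T'} \<subseteq> {T\<in>\<T>. p \<in> T \<and> q \<in> T}" using T m by auto
  have "card {T,T'} = 2" using T(3) by simp
  then have "card {T\<in>\<T>. p \<in> T \<and> q \<in> T} = 2" using card_mono[OF fin2 sub] card_le2[OF pq] by simp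
  then have eq: "{T\<in>\<T>. p \<in> T \<and> q \<in> T} = {T,T'}"
    using card_subset_eq[OF fin2 sub] \<open>card {T,T'} = 2\<close> by simp
  then show "{T\<in>\<T>. {p,q} \<subseteq> T} = {T,T'}" by (simp only: edge_set_eq)
  have "{p,q} \<in> mesh_edges \<T>" unfolding mesh_edges_def using T m pq by auto
  then show "{p,q} \<in> internal_edges \<T>" unfolding internal_edges_def edge_set_eq
    using \<open>card {T\<in>\<T>. p \<in> T \<and> q \<in> T} = 2\<close> by simp
qed

lemma closed_hulls:
  assumes "finite X" "X \<subseteq> \<T>"
  shows "closed (\<Union>((\<lambda>T. convex hull T) ` X))"
proof (rule closed_Union)
  show "finite ((\<lambda>T. convex hull T) ` X)" using assms(1) by simp
  show "\<forall>S\<in>(\<lambda>T. convex hull T) ` X. closed S"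
  proof
    fix S assume "S \<in> (\<lambda>T. convex hull T) ` X"
    then obtain T where "T \<in> X" "S = convex hull T" by blast
    then have "finite T" using assms(2) fin_tri by blast
    then show "closed S" using \<open>S = convex hull T\<close> by (simp add: compact_imp_closed compact_convex_hull finite_imp_compact)
  qed
qed

lemma bnd_edge_frontier:
  assumes T: "T \<in> \<T>" "p \<in> T" "q \<in> T" "p \<noteq> q" and only: "{T'\<in>\<T>. p \<in> T' \<and> q \<in> T'} = {T}"
    and x: "x \<in> open_segment p q"
  shows "x \<in> frontier \<Omega>"
proof -
  obtain s where s: "T = {p,q,s}" "s \<noteq> p" "s \<noteq> q" "orient2d p q s \<noteq> 0" using third_vertex[OF T] by blast
  define ors where "ors = orient2d p q s"
  obtain u where u: "0 < u" "u < 1" "x = (1 - u) *\<^sub>R p + u *\<^sub>R q" using x unfolding in_segment by blast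
  have ox: "orient2d a b x = (1 - u) * orient2d a b p + u * orient2d a b q" for a b
    using orient_affine[of "1 - u" u 0 a b p q s] u(3) by simp
  have xT: "x \<in> convex hull T"
  proof -
    have "x \<in> convex hull {p,q}" unfolding convex_hull_2 using u by force
    moreover have "convex hull {p,q} \<subseteq> convex hull T" using T by (intro hull_mono) auto
    ultimately show ?thesis by blast
  qed
  then have xc: "x \<in> closure \<Omega>" using cover T(1) by blast
  have notF: "x \<notin> convex hull T'" if T': "T' \<in> \<T>" "T' \<noteq> T" for T'
  proof
    assume "x \<in> convex hull T'"
    then have xi: "x \<in> convex hull (T \<inter> T')" using conf[OF T(1) T'(1)] xT by blast
    have "\<not> (p \<in> T' \<and> q \<in> T')" using only T' by blast
    then have "T \<inter> T' \<subseteq> {q,s} \<or> T \<inter> T' \<subseteq> {p,s}" using s(1) by blast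
    then show False
    proof
      assume "T \<inter> T' \<subseteq> {q,s}"
      then have "x \<in> convex hull {q,s}" using xi hull_mono by blast
      then have "orient2d q s x = 0" by (rule hull2_orient)
      moreover have "orient2d q s x = (1 - u) * ors" unfolding ox ors_def by (simp add: orient_deg orient_cyc(1)[of q s p])
      ultimately show False using u s(4) unfolding ors_def by simp
    next
      assume "T \<inter> T' \<subseteq> {p,s}"
      then have "x \<in> convex hull {p,s}" using xi hull_mono by blast
      then have "orient2d p s x = 0" by (rule hull2_orient)
      moreover have "orient2d p s x = - u * ors" unfolding ox ors_def
        by (simp add: orient2d_def algebra_simps)
      ultimately show False using u s(4) unfolding ors_def by simp
    qed
  qed
  define F where "F = \<Union>((\<lambda>T'. convex hull T') ` (\<T> - {T}))"
  have "closed F" unfolding F_def by (rule closed_hulls) (use fin in auto)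
  have xF: "x \<notin> F" unfolding F_def using notF by blast
  show ?thesis
  proof (rule ccontr)
    assume "x \<notin> frontier \<Omega>"
    then have "x \<in> \<Omega>" using xc omega_open unfolding frontier_def by (simp add: interior_open)
    have "open (\<Omega> - F)" using omega_open \<open>closed F\<close> by (rule open_Diff)
    then obtain \<epsilon> where e: "\<epsilon> > 0" "x + \<epsilon> *\<^sub>R (x - s) \<in> \<Omega> - F"
      using small_step[of "\<Omega> - F" x "x - s"] \<open>x \<in> \<Omega>\<close> xF by blast
    define y where "y = x + \<epsilon> *\<^sub>R (x - s)"
    have y3: "y = (1 + \<epsilon>) *\<^sub>R x + (- \<epsilon>) *\<^sub>R s + 0 *\<^sub>R s" unfolding y_def by (simp add: algebra_simps)
    have oy1: "orient2d p q y = (1 + \<epsilon>) * orient2d p q x + (- \<epsilon>) * orient2d p q s + 0 * orient2d p q s"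
      unfolding y3 by (rule orient_affine) simp
    have "orient2d p q x = 0" unfolding ox by (simp add: orient_deg)
    then have oy: "orient2d p q y = - \<epsilon> * ors" using oy1 unfolding ors_def by simp
    have "y \<in> closure \<Omega>" using e closure_subset unfolding y_def by blast
    then obtain T' where T': "T' \<in> \<T>" "y \<in> convex hull T'" using cover by blast
    have "T' = T" using T' e unfolding F_def y_def by blast
    then have "y \<in> convex hull {p,q,s}" using T' s(1) by simp
    then have "0 \<le> orient2d p q y / ors" using hull3_bary[OF s(4)] unfolding ors_def by blast
    then show False unfolding oy using e s(4) unfolding ors_def
      by (simp add: zero_le_divide_iff mult_le_0_iff)
  qed
qed

end

lemma closed_hulls_gen:
  fixes X :: "pt set set"
  assumes "finite X" "\<And>T. T \<in> X \<Longrightarrow> finite T"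
  shows "closed (\<Union>((\<lambda>T. convex hull T) ` X))"
proof (rule closed_Union)
  show "finite ((\<lambda>T. convex hull T) ` X)" using assms(1) by simp
  show "\<forall>S\<in>(\<lambda>T. convex hull T) ` X. closed S"
  proof
    fix S assume "S \<in> (\<lambda>T. convex hull T) ` X"
    then obtain T where "T \<in> X" "S = convex hull T" by blast
    then have "finite T" using assms(2) by blast
    then show "closed S" using \<open>S = convex hull T\<close> by (simp add: compact_imp_closed compact_convex_hull finite_imp_compact)
  qed
qed

lemma interior_nbhd:
  assumes o: "orient2d p q s \<noteq> 0"
    and x: "0 < orient2d q s x / orient2d p q s" "0 < orient2d s p x / orient2d p q s" "0 < orient2d p q x / orient2d p q s"
  shows "\<exists>V. open V \<and> x \<in> V \<and> V \<subseteq> convex hull {p,q,s}"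
proof -
  define V where "V = {y. 0 < orient2d q s y / orient2d p q s} \<inter> {y. 0 < orient2d s p y / orient2d p q s} \<inter> {y. 0 < orient2d p q y / orient2d p q s}"
  have "open V" unfolding V_def by (intro open_Int open_Collect_less continuous_intros) (auto simp: o)
  moreover have "x \<in> V" unfolding V_def using x by simp
  moreover have "V \<subseteq> convex hull {p,q,s}"
  proof
    fix y assume "y \<in> V"
    then show "y \<in> convex hull {p,q,s}" unfolding hull3_bary[OF o] V_def by simp
  qed
  ultimately show ?thesis by blast
qed

context mesh
begin

lemma edge_nbhd:
  assumes T: "{p,q,s} \<in> \<T>" and T': "{p,q,s'} \<in> \<T>"
    and d: "p \<noteq> q" "p \<noteq> s" "q \<noteq> s" "p \<noteq> s'" "q \<noteq> s'" "s \<noteq> s'"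
    and x: "0 < orient2d q s x / orient2d p q s" "0 < orient2d s p x / orient2d p q s" "orient2d p q x = 0"
  shows "\<exists>V. open V \<and> x \<in> V \<and> V \<subseteq> convex hull {p,q,s} \<union> convex hull {p,q,s'}"
proof -
  have o1: "orient2d p q s \<noteq> 0" using orient_ne[OF T refl] d by blast
  have o2: "orient2d p q s' \<noteq> 0" using orient_ne[OF T' refl] d by blast
  have opp: "orient2d p q s * orient2d p q s' < 0" by (rule opp_sides[OF T T' d])
  define a where "a = orient2d q s x / orient2d p q s"
  define b where "b = orient2d s p x / orient2d p q s"
  have ab: "a + b = 1" using bary_sum[OF o1, of x] x(3) unfolding a_def b_def by simp
  have xr: "x = a *\<^sub>R p + b *\<^sub>R q + 0 *\<^sub>R s" using bary_rec[OF o1, of x] x(3) unfolding a_def b_def by simp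
  have ox: "orient2d u v x = a * orient2d u v p + b * orient2d u v q" for u v
    using orient_affine[of a b 0 u v p q s] ab xr by simp
  define V where "V = {y. 0 < orient2d q s y / orient2d p q s} \<inter> {y. 0 < orient2d s p y / orient2d p q s}
     \<inter> {y. 0 < orient2d q s' y / orient2d p q s'} \<inter> {y. 0 < orient2d s' p y / orient2d p q s'}"
  have "open V" unfolding V_def by (intro open_Int open_Collect_less continuous_intros) (auto simp: o1 o2)
  moreover have "x \<in> V"
  proof -
    have "orient2d q s' x = a * orient2d p q s'" unfolding ox by (simp add: orient_deg orient_cyc(1)[of q s' p])
    moreover have "orient2d s' p x = b * orient2d p q s'" unfolding ox by (simp add: orient2d_def algebra_simps)
    moreover have "0 < a" "0 < b" using x unfolding a_def b_def by auto
    ultimately show ?thesis unfolding V_def using x(1,2) o2 by simp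
  qed
  moreover have "V \<subseteq> convex hull {p,q,s} \<union> convex hull {p,q,s'}"
  proof
    fix y assume y: "y \<in> V"
    show "y \<in> convex hull {p,q,s} \<union> convex hull {p,q,s'}"
    proof (cases "0 \<le> orient2d p q y / orient2d p q s")
      case True
      have "y \<in> convex hull {p,q,s}" unfolding hull3_bary[OF o1] using y True unfolding V_def by simp
      then show ?thesis by blast
    next
      case False
      then have "orient2d p q y / orient2d p q s < 0" by simp
      then have "0 \<le> orient2d p q y / orient2d p q s'" using opp
        by (auto simp: divide_less_0_iff zero_le_divide_iff mult_less_0_iff)
      then have "y \<in> convex hull {p,q,s'}" unfolding hull3_bary[OF o2] using y unfolding V_def by simp
      then show ?thesis by blast
    qed
  qed
  ultimately show ?thesis by blast
qed

lemma seg_vertex: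
  assumes T: "T \<in> \<T>" "p \<in> T" "q \<in> T" "p \<noteq> q" and z: "z \<in> T'" "T' \<in> \<T>"
    and l: "0 < l" "l < 1" "z = (1 - l) *\<^sub>R p + l *\<^sub>R q"
  shows False
proof -
  have "z \<in> convex hull {p,q}" unfolding convex_hull_2 using l by force
  moreover have "convex hull {p,q} \<subseteq> convex hull T" using T by (intro hull_mono) auto
  ultimately have "z \<in> T" using vert_in_hull[OF T(1) z(2) z(1)] by blast
  obtain s where s: "T = {p,q,s}" "s \<noteq> p" "s \<noteq> q" "orient2d p q s \<noteq> 0" using third_vertex[OF T] by blast
  have "z \<noteq> p"
  proof
    assume "z = p"
    then have "l *\<^sub>R (q - p) = 0" using l(3) by (simp add: algebra_simps)
    then show False using l T(4) by simp
  qed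
  moreover have "z \<noteq> q"
  proof
    assume "z = q"
    then have "(1 - l) *\<^sub>R (p - q) = 0" using l(3) by (simp add: algebra_simps)
    then show False using l T(4) by simp
  qed
  ultimately have "z = s" using \<open>z \<in> T\<close> s(1) by blast
  have "orient2d p q z = (1 - l) * orient2d p q p + l * orient2d p q q"
    using orient_affine[of "1 - l" l 0 p q p q q] l(3) by simp
  then show False using \<open>z = s\<close> s(4) by (simp add: orient_deg)
qed

lemma legs_disjoint:
  assumes Ti: "Ti \<in> \<T>" "p \<in> Ti" "qi \<in> Ti" "p \<noteq> qi"
    and Tj: "Tj \<in> \<T>" "p \<in> Tj" "qj \<in> Tj" "p \<noteq> qj" and d: "qi \<noteq> qj"
  shows "open_segment p qi \<inter> open_segment p qj = {}"
proof (rule ccontr)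
  assume "open_segment p qi \<inter> open_segment p qj \<noteq> {}"
  then obtain y where "y \<in> open_segment p qi" "y \<in> open_segment p qj" by blast
  then obtain a b where a: "0 < a" "a < 1" "y = (1 - a) *\<^sub>R p + a *\<^sub>R qi"
    and b: "0 < b" "b < 1" "y = (1 - b) *\<^sub>R p + b *\<^sub>R qj" unfolding in_segment by blast
  have eq: "a *\<^sub>R (qi - p) = b *\<^sub>R (qj - p)" using a(3) b(3) by (simp add: algebra_simps)
  consider "a < b" | "b < a" | "a = b" by linarith
  then show False
  proof cases
    case 1
    define l where "l = a / b"
    have l: "0 < l" "l < 1" using 1 a b unfolding l_def by auto
    have "qj - p = (1/b) *\<^sub>R (b *\<^sub>R (qj - p))" using b by simp
    also have "\<dots> = (1/b) *\<^sub>R (a *\<^sub>R (qi - p))" using eq by simp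
    also have "\<dots> = l *\<^sub>R (qi - p)" unfolding l_def by simp
    finally have "qj - p = l *\<^sub>R (qi - p)" .
    then have "qj = (1 - l) *\<^sub>R p + l *\<^sub>R qi" by (simp add: algebra_simps)
    then show False using seg_vertex[OF Ti Tj(3) Tj(1) l] by blast
  next
    case 2
    define l where "l = b / a"
    have l: "0 < l" "l < 1" using 2 a b unfolding l_def by auto
    have "qi - p = (1/a) *\<^sub>R (a *\<^sub>R (qi - p))" using a by simp
    also have "\<dots> = (1/a) *\<^sub>R (b *\<^sub>R (qj - p))" using eq by simp
    also have "\<dots> = l *\<^sub>R (qj - p)" unfolding l_def by simp
    finally have "qi - p = l *\<^sub>R (qj - p)" .
    then have "qi = (1 - l) *\<^sub>R p + l *\<^sub>R qj" by (simp add: algebra_simps)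
    then show False using seg_vertex[OF Tj Ti(3) Ti(1) l] by blast
  next
    case 3
    then have "qi = qj" using eq a(1) by simp
    then show False using d by blast
  qed
qed

end

lemma connected_in_one:
  fixes Cs :: "pt set set"
  assumes "finite Cs" "pairwise disjnt Cs" "\<And>c. c \<in> Cs \<Longrightarrow> closed c"
    and S: "connected S" "S \<subseteq> \<Union>Cs" and c: "c \<in> Cs" "x \<in> S" "x \<in> c"
  shows "S \<subseteq> c"
proof -
  define R where "R = \<Union>(Cs - {c})"
  have "closed R" unfolding R_def using assms(1,3) by (intro closed_Union) auto
  have eq: "S \<inter> c = S \<inter> (- R)"
  proof
    show "S \<inter> c \<subseteq> S \<inter> - R"
    proof
      fix y assume y: "y \<in> S \<inter> c"
      have "y \<notin> c'" if "c' \<in> Cs" "c' \<noteq> c" for c'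
        using assms(2) that c(1) y unfolding pairwise_def disjnt_def by blast
      then show "y \<in> S \<inter> - R" using y unfolding R_def by blast
    qed
    show "S \<inter> - R \<subseteq> S \<inter> c" using S(2) unfolding R_def by blast
  qed
  have "openin (top_of_set S) (S \<inter> c)" unfolding eq using \<open>closed R\<close> by (intro openin_open_Int) auto
  moreover have "closedin (top_of_set S) (S \<inter> c)" using assms(3)[OF c(1)] by (rule closedin_closed_Int)
  ultimately have "S \<inter> c = {} \<or> S \<inter> c = S" using S(1) unfolding connected_clopen by blast
  then show ?thesis using c by blast
qed

context mesh
begin

definition adj :: "pt \<Rightarrow> pt set \<Rightarrow> pt set \<Rightarrow> bool" where
  "adj p T T' \<longleftrightarrow> T \<in> \<T> \<and> T' \<in> \<T> \<and> p \<in> T \<and> p \<in> T' \<and> (\<exists>q. q \<noteq> p \<and> q \<in> T \<and> q \<in> T')"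

definition BE :: "pt \<Rightarrow> pt set set \<Rightarrow> pt set" where
  "BE p C = {q. q \<noteq> p \<and> (\<exists>T\<in>C. q \<in> T) \<and> card {T\<in>\<T>. p \<in> T \<and> q \<in> T} = 1}"

definition cls :: "pt \<Rightarrow> pt set set \<Rightarrow> bool" where
  "cls p C \<longleftrightarrow> C \<subseteq> \<T> \<and> (\<forall>T\<in>C. p \<in> T) \<and> C \<noteq> {} \<and> (\<forall>T\<in>C. \<forall>T'. adj p T T' \<longrightarrow> T' \<in> C)
     \<and> (\<exists>T'\<in>\<T>. p \<in> T' \<and> T' \<notin> C)"

definition avoid :: "pt \<Rightarrow> real \<Rightarrow> bool" where
  "avoid p \<rho> \<longleftrightarrow> (\<forall>T\<in>\<T>. p \<notin> T \<longrightarrow> ball p \<rho> \<inter> convex hull T = {}) \<and>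
     (\<forall>T\<in>\<T>. p \<in> T \<longrightarrow> ball p \<rho> \<inter> convex hull (T - {p}) = {})"

lemma avoid_mono:
  assumes "avoid p \<rho>" "\<rho>' \<le> \<rho>" shows "avoid p \<rho>'"
proof -
  have "ball p \<rho>' \<subseteq> ball p \<rho>" using assms(2) by (rule subset_ball)
  then show ?thesis using assms(1) unfolding avoid_def by blast
qed

lemma radius:
  assumes "T0 \<in> \<T>" "p \<in> T0"
  shows "\<exists>\<rho>>0. avoid p \<rho>"
proof -
  define K1 where "K1 = \<Union>((\<lambda>T. convex hull T) ` {T\<in>\<T>. p \<notin> T})"
  define K2 where "K2 = \<Union>((\<lambda>T. convex hull T) ` ((\<lambda>T. T - {p}) ` {T\<in>\<T>. p \<in> T}))"
  have "closed K1" unfolding K1_def by (rule closed_hulls_gen) (use fin fin_tri in auto)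
  moreover have "closed K2" unfolding K2_def by (rule closed_hulls_gen) (use fin fin_tri in auto)
  ultimately have "open (- (K1 \<union> K2))" by auto
  moreover have "p \<notin> K1"
  proof
    assume "p \<in> K1"
    then obtain T where "T \<in> \<T>" "p \<notin> T" "p \<in> convex hull T" unfolding K1_def by blast
    then show False using vert_in_hull[OF _ assms(1,2)] by blast
  qed
  moreover have "p \<notin> K2"
  proof
    assume "p \<in> K2"
    then obtain T where T: "T \<in> \<T>" "p \<in> T" "p \<in> convex hull (T - {p})" unfolding K2_def by blast
    then have "p \<in> affine hull (T - {p})" using convex_hull_subset_affine_hull by blast
    then have "affine_dependent T" unfolding affine_dependent_def using T(2) by blast
    then show False using indep[OF T(1)] by blast
  qed
  ultimately obtain \<rho> where "\<rho> > 0" "ball p \<rho> \<subseteq> - (K1 \<union> K2)" using open_contains_ball by blast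
  moreover have "avoid p \<rho>" unfolding avoid_def
  proof (intro conjI ballI impI)
    fix T assume "T \<in> \<T>" "p \<notin> T"
    then have "convex hull T \<subseteq> K1" unfolding K1_def by blast
    then show "ball p \<rho> \<inter> convex hull T = {}" using calculation(2) by blast
  next
    fix T assume "T \<in> \<T>" "p \<in> T"
    then have "convex hull (T - {p}) \<subseteq> K2" unfolding K2_def by blast
    then show "ball p \<rho> \<inter> convex hull (T - {p}) = {}" using calculation(2) by blast
  qed
  ultimately show ?thesis by blast
qed

lemma sep:
  assumes "cls p C" "T \<in> C" "T' \<in> \<T>" "p \<in> T'" "T' \<notin> C"
  shows "convex hull T \<inter> convex hull T' = {p}"
proof -
  have TT: "T \<in> \<T>" "p \<in> T" using assms unfolding cls_def by auto
  have "T \<inter> T' = {p}"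
  proof (rule ccontr)
    assume "T \<inter> T' \<noteq> {p}"
    then obtain q where "q \<noteq> p" "q \<in> T" "q \<in> T'" using TT assms(4) by blast
    then have "adj p T T'" unfolding adj_def using TT assms(3,4) by blast
    then show False using assms unfolding cls_def by blast
  qed
  then show ?thesis using conf[OF TT(1) assms(3)] by simp
qed

lemma U_hit:
  assumes "T \<in> \<T>" "p \<in> T" "\<rho> > 0"
  shows "\<exists>y. y \<in> ball p \<rho> - {p} \<and> y \<in> convex hull T"
proof -
  obtain q s where qs: "T = {p,q,s}" "p \<noteq> q" using tri_enum[OF assms(1,2)] by blast
  obtain \<epsilon> where e: "\<epsilon> > 0" "\<epsilon> < 1" "p + \<epsilon> *\<^sub>R (q - p) \<in> ball p \<rho>"
    using small_step[of "ball p \<rho>" p "q - p"] assms(3) by auto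
  define y where "y = p + \<epsilon> *\<^sub>R (q - p)"
  have "y \<noteq> p" unfolding y_def using e qs(2) by simp
  moreover have "y \<in> convex hull {p,q}" unfolding convex_hull_2 y_def using e
    by (intro CollectI exI[of _ "1 - \<epsilon>"] exI[of _ \<epsilon>]) (auto simp: algebra_simps)
  moreover have "convex hull {p,q} \<subseteq> convex hull T" using qs by (intro hull_mono) auto
  ultimately show ?thesis using e(3) unfolding y_def by blast
qed

lemma clopen_contra:
  assumes cl: "cls p C" and r: "\<rho> > 0" and op: "open ((ball p \<rho> - {p}) \<inter> \<Union>((\<lambda>T. convex hull T) ` C))"
  shows False
proof -
  define U where "U = ball p \<rho> - {p}"
  define W where "W = \<Union>((\<lambda>T. convex hull T) ` C)"
  have fC: "finite C" using cl fin unfolding cls_def by (metis finite_subset)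
  have "closed W" unfolding W_def by (rule closed_hulls_gen[OF fC]) (use cl fin_tri in \<open>auto simp: cls_def\<close>)
  have "connected U" unfolding U_def by (rule connected_punctured_ball) simp
  moreover have "openin (top_of_set U) (U \<inter> W)" unfolding openin_open
    by (rule exI[of _ "U \<inter> W"]) (use op in \<open>auto simp: U_def W_def\<close>)
  moreover have "closedin (top_of_set U) (U \<inter> W)" using \<open>closed W\<close> by (rule closedin_closed_Int)
  ultimately have UW: "U \<inter> W = {} \<or> U \<inter> W = U" unfolding connected_clopen by blast
  obtain T0 where T0: "T0 \<in> C" using cl unfolding cls_def by blast
  then have "T0 \<in> \<T>" "p \<in> T0" using cl unfolding cls_def by auto
  then obtain y0 where "y0 \<in> U" "y0 \<in> convex hull T0" using U_hit r unfolding U_def by blast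
  then have "U \<inter> W \<noteq> {}" using T0 unfolding W_def by blast
  then have "U \<subseteq> W" using UW by blast
  obtain T' where T': "T' \<in> \<T>" "p \<in> T'" "T' \<notin> C" using cl unfolding cls_def by blast
  then obtain y where y: "y \<in> U" "y \<in> convex hull T'" using U_hit r unfolding U_def by blast
  then obtain T where "T \<in> C" "y \<in> convex hull T" using \<open>U \<subseteq> W\<close> unfolding W_def by blast
  then have "y = p" using sep[OF cl \<open>T \<in> C\<close> T'] y by blast
  then show False using y unfolding U_def by blast
qed

lemma interior_case:
  assumes cl: "cls p C" and r: "\<rho> > 0" "avoid p \<rho>" and pO: "p \<in> \<Omega>"
  shows False
proof -
  obtain r2 where r2: "r2 > 0" "ball p r2 \<subseteq> \<Omega>" using omega_open pO open_contains_ball by blast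
  define \<rho>' where "\<rho>' = min \<rho> r2"
  have r': "\<rho>' > 0" "avoid p \<rho>'" "ball p \<rho>' \<subseteq> \<Omega>" unfolding \<rho>'_def using r r2 avoid_mono by auto
  define U where "U = ball p \<rho>' - {p}"
  define W where "W = \<Union>((\<lambda>T. convex hull T) ` C)"
  define W' where "W' = \<Union>((\<lambda>T. convex hull T) ` {T\<in>\<T>. p \<in> T \<and> T \<notin> C})"
  have "closed W'" unfolding W'_def by (rule closed_hulls_gen) (use fin fin_tri in auto)
  have "U \<inter> W = U - W'"
  proof
    show "U \<inter> W \<subseteq> U - W'"
    proof
      fix y assume y: "y \<in> U \<inter> W"
      then obtain T where T: "T \<in> C" "y \<in> convex hull T" unfolding W_def by blast
      have "y \<notin> convex hull T'" if "T' \<in> \<T>" "p \<in> T'" "T' \<notin> C" for T'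
        using sep[OF cl T(1) that] T(2) y unfolding U_def by blast
      then show "y \<in> U - W'" using y unfolding W'_def by blast
    qed
    show "U - W' \<subseteq> U \<inter> W"
    proof
      fix y assume y: "y \<in> U - W'"
      then have "y \<in> closure \<Omega>" using r'(3) closure_subset unfolding U_def by blast
      then obtain T where T: "T \<in> \<T>" "y \<in> convex hull T" using cover by blast
      have "p \<in> T" using r'(2) T y unfolding avoid_def U_def by blast
      then have "T \<in> C" using y T unfolding W'_def by blast
      then show "y \<in> U \<inter> W" using y T unfolding W_def by blast
    qed
  qed
  moreover have "open (U - W')" unfolding U_def using \<open>closed W'\<close> by (intro open_Diff) auto
  ultimately show False using clopen_contra[OF cl r'(1)] unfolding U_def W_def by simp
qed

end

context mesh
begin

lemma cls_sub: "cls p C \<Longrightarrow> T \<in> C \<Longrightarrow> T \<in> \<T> \<and> p \<in> T"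
  unfolding cls_def by blast

lemma edge_case:
  assumes cl: "cls p C" and T: "T \<in> C" "T = {p,q,s}" and d: "p \<noteq> q" "p \<noteq> s" "q \<noteq> s"
    and x: "orient2d p q x = 0" "0 < orient2d q s x / orient2d p q s" "0 < orient2d s p x / orient2d p q s"
    and nb: "q \<notin> BE p C"
  shows "\<exists>V. open V \<and> x \<in> V \<and> V \<subseteq> \<Union>((\<lambda>T. convex hull T) ` C)"
proof -
  have TT: "T \<in> \<T>" "p \<in> T" using cls_sub[OF cl T(1)] by auto
  define S where "S = {T\<in>\<T>. p \<in> T \<and> q \<in> T}"
  have fS: "finite S" unfolding S_def using fin by simp
  have qT: "q \<in> T" using T(2) by simp
  have TS: "T \<in> S" unfolding S_def using TT qT by simp
  have "q \<in> BE p C" if "card S = 1" unfolding BE_def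
    using that d(1) T(1) qT unfolding S_def by auto
  then have "card S \<noteq> 1" using nb by blast
  then have "\<exists>T'\<in>S. T' \<noteq> T"
  proof -
    have "S \<noteq> {T}" using \<open>card S \<noteq> 1\<close> by auto
    then show ?thesis using TS by blast
  qed
  then obtain T' where T': "T' \<in> \<T>" "p \<in> T'" "q \<in> T'" "T' \<noteq> T" unfolding S_def by blast
  obtain s' where s': "T' = {p,q,s'}" "s' \<noteq> p" "s' \<noteq> q" using third_vertex[OF T'(1-3) d(1)] by blast
  have "adj p T T'" unfolding adj_def
    by (intro conjI exI[of _ q]) (use TT T' qT d(1) in auto)
  then have "T' \<in> C" using cl T(1) unfolding cls_def by blast
  have "s \<noteq> s'"
  proof
    assume "s = s'"
    then have "T' = T" using T(2) s'(1) by simp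
    then show False using T'(4) by blast
  qed
  obtain V where V: "open V" "x \<in> V" "V \<subseteq> convex hull {p,q,s} \<union> convex hull {p,q,s'}"
    using edge_nbhd[of p q s s' x] TT(1) T' T(2) s'(1) d s'(2,3) \<open>s \<noteq> s'\<close> x by auto
  then have "V \<subseteq> convex hull T \<union> convex hull T'" using T(2) s'(1) by simp
  then have "V \<subseteq> \<Union>((\<lambda>T. convex hull T) ` C)" using T(1) \<open>T' \<in> C\<close> by blast
  then show ?thesis using V by blast
qed

lemma pt_nbhd:
  assumes cl: "cls p C" and av: "avoid p \<rho>" and nb: "BE p C = {}"
    and x: "x \<in> ball p \<rho> - {p}" and T: "T \<in> C" "x \<in> convex hull T"
  shows "\<exists>V. open V \<and> x \<in> V \<and> V \<subseteq> \<Union>((\<lambda>T. convex hull T) ` C)"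
proof -
  have TT: "T \<in> \<T>" "p \<in> T" using cls_sub[OF cl T(1)] by auto
  obtain q s where qs: "T = {p,q,s}" "p \<noteq> q" "p \<noteq> s" "q \<noteq> s" and o: "orient2d p q s \<noteq> 0"
    using tri_enum[OF TT] by blast
  define lp where "lp = orient2d q s x / orient2d p q s"
  define lq where "lq = orient2d s p x / orient2d p q s"
  define ls where "ls = orient2d p q x / orient2d p q s"
  have ge: "0 \<le> lp" "0 \<le> lq" "0 \<le> ls" using T(2) qs(1) hull3_bary[OF o] unfolding lp_def lq_def ls_def by auto
  have sum1: "lp + lq + ls = 1" using bary_sum[OF o] unfolding lp_def lq_def ls_def by simp
  have rec: "x = lp *\<^sub>R p + lq *\<^sub>R q + ls *\<^sub>R s" using bary_rec[OF o] unfolding lp_def lq_def ls_def by simp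
  have lp0: "0 < lp"
  proof (rule ccontr)
    assume "\<not> 0 < lp"
    then have "lp = 0" using ge by simp
    then have "x \<in> convex hull {q,s}" unfolding convex_hull_2 using rec sum1 ge by force
    moreover have "{q,s} = T - {p}" unfolding qs(1) using qs(2,3) by auto
    moreover have "ball p \<rho> \<inter> convex hull (T - {p}) = {}" using av TT unfolding avoid_def by blast
    ultimately show False using x by (metis DiffD1 disjoint_iff)
  qed
  have not00: "\<not> (lq = 0 \<and> ls = 0)"
  proof
    assume "lq = 0 \<and> ls = 0"
    then have "x = p" using rec sum1 by simp
    then show False using x by blast
  qed
  have W: "convex hull T \<subseteq> \<Union>((\<lambda>T. convex hull T) ` C)" using T(1) by blast
  consider "0 < lq" "0 < ls" | "ls = 0" | "lq = 0" using ge not00 by linarith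
  then show ?thesis
  proof cases
    case 1
    then obtain V where "open V" "x \<in> V" "V \<subseteq> convex hull {p,q,s}"
      using interior_nbhd[OF o] lp0 unfolding lp_def lq_def ls_def by blast
    then show ?thesis using W unfolding qs(1) by blast
  next
    case 2
    then have "orient2d p q x = 0" using o unfolding ls_def by simp
    moreover have "0 < lq" using 2 not00 ge by simp
    ultimately show ?thesis using edge_case[OF cl T(1) qs(1-4)] lp0 nb unfolding lp_def lq_def by blast
  next
    case 3
    then have "orient2d s p x = 0" using o unfolding lq_def by simp
    moreover have "orient2d p s x = - orient2d s p x" by (simp add: orient2d_def algebra_simps)
    ultimately have a: "orient2d p s x = 0" by simp
    have "0 < ls" using 3 not00 ge by simp
    have e1: "orient2d s q x / orient2d p s q = lp" unfolding lp_def
    proof -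
      have "orient2d s q x = - orient2d q s x" "orient2d p s q = - orient2d p q s" by (simp_all add: orient2d_def algebra_simps)
      then show "orient2d s q x / orient2d p s q = orient2d q s x / orient2d p q s" by simp
    qed
    have e2: "orient2d q p x / orient2d p s q = ls" unfolding ls_def
    proof -
      have "orient2d q p x = - orient2d p q x" "orient2d p s q = - orient2d p q s" by (simp_all add: orient2d_def algebra_simps)
      then show "orient2d q p x / orient2d p s q = orient2d p q x / orient2d p q s" by simp
    qed
    have T2: "T = {p,s,q}" using qs(1) by blast
    show ?thesis using edge_case[OF cl T(1) T2 qs(3,2) qs(4)[symmetric] a] e1 e2 lp0 \<open>0 < ls\<close> nb by simp
  qed
qed

lemma no_BE_false:
  assumes cl: "cls p C" and r: "\<rho> > 0" "avoid p \<rho>" and nb: "BE p C = {}"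
  shows False
proof -
  have "open ((ball p \<rho> - {p}) \<inter> \<Union>((\<lambda>T. convex hull T) ` C))"
    unfolding open_subopen[of "(ball p \<rho> - {p}) \<inter> \<Union>((\<lambda>T. convex hull T) ` C)"]
  proof
    fix x assume x: "x \<in> (ball p \<rho> - {p}) \<inter> \<Union>((\<lambda>T. convex hull T) ` C)"
    then obtain T where "T \<in> C" "x \<in> convex hull T" by blast
    then obtain V where V: "open V" "x \<in> V" "V \<subseteq> \<Union>((\<lambda>T. convex hull T) ` C)"
      using pt_nbhd[OF cl r(2) nb] x by blast
    show "\<exists>T. open T \<and> x \<in> T \<and> T \<subseteq> (ball p \<rho> - {p}) \<inter> \<Union>((\<lambda>T. convex hull T) ` C)"
      by (rule exI[of _ "V \<inter> (ball p \<rho> - {p})"]) (use V x in auto)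
  qed
  then show False by (rule clopen_contra[OF cl r(1)])
qed

lemma parity:
  assumes cl: "cls p C"
  shows "finite (BE p C)" "card (BE p C) \<noteq> 1"
proof -
  have CT: "C \<subseteq> \<T>" and pC: "\<And>T. T \<in> C \<Longrightarrow> p \<in> T" using cl unfolding cls_def by auto
  have fC: "finite C" using CT fin finite_subset by blast
  define E where "E = \<Union>C - {p}"
  have fE: "finite E" unfolding E_def using fC CT fin_tri by blast
  define n where "n q = card {T\<in>C. q \<in> T}" for q
  have Sq: "{T\<in>\<T>. p \<in> T \<and> q \<in> T} = {T\<in>C. q \<in> T}" if qE: "q \<in> E" for q
  proof
    show "{T\<in>C. q \<in> T} \<subseteq> {T\<in>\<T>. p \<in> T \<and> q \<in> T}" using CT pC by blast
    show "{T\<in>\<T>. p \<in> T \<and> q \<in> T} \<subseteq> {T\<in>C. q \<in> T}"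
    proof
      fix T' assume T': "T' \<in> {T\<in>\<T>. p \<in> T \<and> q \<in> T}"
      obtain T where T: "T \<in> C" "q \<in> T" "q \<noteq> p" using qE unfolding E_def by blast
      have "T' \<in> C"
      proof (cases "T' = T")
        case True then show ?thesis using T by simp
      next
        case False
        have "adj p T T'" unfolding adj_def using T T' CT pC by blast
        then show ?thesis using cl T(1) unfolding cls_def by blast
      qed
      then show "T' \<in> {T\<in>C. q \<in> T}" using T' by blast
    qed
  qed
  have BEeq: "BE p C = {q\<in>E. n q = 1}"
  proof
    show "BE p C \<subseteq> {q\<in>E. n q = 1}"
    proof
      fix q assume q: "q \<in> BE p C"
      then have "q \<in> E" unfolding BE_def E_def by blast
      then show "q \<in> {q\<in>E. n q = 1}" using q Sq[OF \<open>q \<in> E\<close>] unfolding BE_def n_def by simp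
    qed
    show "{q\<in>E. n q = 1} \<subseteq> BE p C"
    proof
      fix q assume q: "q \<in> {q\<in>E. n q = 1}"
      then have "q \<in> E" by blast
      then show "q \<in> BE p C" using q Sq[OF \<open>q \<in> E\<close>] unfolding BE_def n_def E_def by auto
    qed
  qed
  then show "finite (BE p C)" using fE by simp
  have n12: "n q = 1 \<or> n q = 2" if qE: "q \<in> E" for q
  proof -
    have "q \<noteq> p" using qE unfolding E_def by blast
    have "n q \<le> 2" using card_le2[of p q] Sq[OF qE] \<open>q \<noteq> p\<close> unfolding n_def by simp
    moreover have "n q \<noteq> 0"
    proof -
      obtain T where "T \<in> C" "q \<in> T" using qE unfolding E_def by blast
      then have "{T\<in>C. q \<in> T} \<noteq> {}" by blast
      then show ?thesis unfolding n_def using fC by simp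
    qed
    ultimately show ?thesis by linarith
  qed
  have k: "\<forall>T\<in>C. card {q\<in>E. q \<in> T} = 2"
  proof
    fix T assume T: "T \<in> C"
    have "{q\<in>E. q \<in> T} = T - {p}" using T unfolding E_def by blast
    moreover have "card (T - {p}) = 2" using card3[OF subsetD[OF CT T]] pC[OF T] fin_tri[OF subsetD[OF CT T]] by simp
    ultimately show "card {q\<in>E. q \<in> T} = 2" by simp
  qed
  have "(\<Sum>q\<in>E. n q) = (\<Sum>T\<in>C. 2)" unfolding n_def
    by (rule sum_multicount_gen[OF fE fC k])
  then have s1: "(\<Sum>q\<in>E. n q) = 2 * card C" by simp
  have sub: "{q\<in>E. n q = 1} \<subseteq> E" by blast
  have "(\<Sum>q\<in>E. n q) = (\<Sum>q\<in>E - {q\<in>E. n q = 1}. n q) + (\<Sum>q\<in>{q\<in>E. n q = 1}. n q)"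
    by (rule sum.subset_diff[OF sub fE])
  also have "(\<Sum>q\<in>E - {q\<in>E. n q = 1}. n q) = (\<Sum>q\<in>E - {q\<in>E. n q = 1}. 2)"
    by (rule sum.cong) (use n12 in auto)
  also have "(\<Sum>q\<in>{q\<in>E. n q = 1}. n q) = (\<Sum>q\<in>{q\<in>E. n q = 1}. 1)" by (rule sum.cong) auto
  finally have "2 * card C = 2 * card (E - {q\<in>E. n q = 1}) + card {q\<in>E. n q = 1}" using s1 by simp
  then show "card (BE p C) \<noteq> 1" unfolding BEeq by presburger
qed

end

context mesh
begin

lemma adj_sym: "adj p a b \<Longrightarrow> adj p b a" unfolding adj_def by blast

lemma rtc_sym: "(adj p)\<^sup>*\<^sup>* a b \<Longrightarrow> (adj p)\<^sup>*\<^sup>* b a"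
proof -
  have "symp (adj p)" unfolding symp_def using adj_sym by blast
  then have "symp ((adj p)\<^sup>*\<^sup>*)" by (rule symp_rtranclp)
  then show "(adj p)\<^sup>*\<^sup>* a b \<Longrightarrow> (adj p)\<^sup>*\<^sup>* b a" by (rule sympD)
qed

lemma rtc_mem: "(adj p)\<^sup>*\<^sup>* T0 T \<Longrightarrow> T0 \<in> \<T> \<Longrightarrow> p \<in> T0 \<Longrightarrow> T \<in> \<T> \<and> p \<in> T"
proof (induction rule: rtranclp_induct)
  case base then show ?case by simp
next
  case (step y z) then show ?case unfolding adj_def by blast
qed

lemma cls_of:
  assumes "T0 \<in> \<T>" "p \<in> T0" "T1 \<in> \<T>" "p \<in> T1" "\<not> (adj p)\<^sup>*\<^sup>* T0 T1"
  shows "cls p {T. (adj p)\<^sup>*\<^sup>* T0 T}"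
  unfolding cls_def
proof (intro conjI)
  show "{T. (adj p)\<^sup>*\<^sup>* T0 T} \<subseteq> \<T>" using rtc_mem assms(1,2) by blast
  show "\<forall>T\<in>{T. (adj p)\<^sup>*\<^sup>* T0 T}. p \<in> T" using rtc_mem assms(1,2) by blast
  show "{T. (adj p)\<^sup>*\<^sup>* T0 T} \<noteq> {}" by blast
  show "\<forall>T\<in>{T. (adj p)\<^sup>*\<^sup>* T0 T}. \<forall>T'. adj p T T' \<longrightarrow> T' \<in> {T. (adj p)\<^sup>*\<^sup>* T0 T}"
    by (auto intro: rtranclp.rtrancl_into_rtrancl)
  show "\<exists>T'\<in>\<T>. p \<in> T' \<and> T' \<notin> {T. (adj p)\<^sup>*\<^sup>* T0 T}" using assms(3-5) by blast
qed

lemma BE_D: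
  assumes "cls p C" "q \<in> BE p C"
  shows "\<exists>T\<in>C. q \<in> T \<and> q \<noteq> p \<and> {T'\<in>\<T>. p \<in> T' \<and> q \<in> T'} = {T}"
proof -
  obtain T where T: "T \<in> C" "q \<in> T" "q \<noteq> p" "card {T'\<in>\<T>. p \<in> T' \<and> q \<in> T'} = 1"
    using assms(2) unfolding BE_def by blast
  have "T \<in> \<T>" "p \<in> T" using cls_sub[OF assms(1) T(1)] by auto
  then have Tin: "T \<in> {T'\<in>\<T>. p \<in> T' \<and> q \<in> T'}" using T(2) by blast
  have "card {T'\<in>\<T>. p \<in> T' \<and> q \<in> T'} = Suc 0" using T(4) by simp
  then obtain x where x: "{T'\<in>\<T>. p \<in> T' \<and> q \<in> T'} = {x}" unfolding card_1_singleton_iff by blast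
  then have "x = T" using Tin by simp
  then have "{T'\<in>\<T>. p \<in> T' \<and> q \<in> T'} = {T}" using x by simp
  then show ?thesis using T(1-3) by blast
qed

lemma BE_frontier:
  assumes "cls p C" "q \<in> BE p C"
  shows "open_segment p q \<subseteq> frontier \<Omega>"
proof
  fix x assume x: "x \<in> open_segment p q"
  obtain T where T: "T \<in> C" "q \<in> T" "q \<noteq> p" "{T'\<in>\<T>. p \<in> T' \<and> q \<in> T'} = {T}" using BE_D[OF assms] by blast
  have "T \<in> \<T>" "p \<in> T" using cls_sub[OF assms(1) T(1)] by auto
  then show "x \<in> frontier \<Omega>" using bnd_edge_frontier[of T p q x] T x by auto
qed

lemma BE_two:
  assumes "cls p C" "\<rho> > 0" "avoid p \<rho>"
  shows "\<exists>q1 q2. q1 \<in> BE p C \<and> q2 \<in> BE p C \<and> q1 \<noteq> q2"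
proof -
  have "BE p C \<noteq> {}" using no_BE_false[OF assms] by blast
  then obtain q1 where q1: "q1 \<in> BE p C" by blast
  have "BE p C \<noteq> {q1}"
  proof
    assume "BE p C = {q1}"
    then have "card (BE p C) = 1" by simp
    then show False using parity(2)[OF assms(1)] by blast
  qed
  then obtain q2 where "q2 \<in> BE p C" "q2 \<noteq> q1" using q1 by blast
  then show ?thesis using q1 by blast
qed

lemma fan:
  assumes T0: "T0 \<in> \<T>" "p \<in> T0" and T1: "T1 \<in> \<T>" "p \<in> T1"
  shows "(adj p)\<^sup>*\<^sup>* T0 T1"
proof (rule ccontr)
  assume nc: "\<not> (adj p)\<^sup>*\<^sup>* T0 T1"
  define A where "A = {T. (adj p)\<^sup>*\<^sup>* T0 T}"
  define B where "B = {T. (adj p)\<^sup>*\<^sup>* T1 T}"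
  have clA: "cls p A" unfolding A_def by (rule cls_of[OF T0 T1 nc])
  have nc': "\<not> (adj p)\<^sup>*\<^sup>* T1 T0" using nc rtc_sym by blast
  have clB: "cls p B" unfolding B_def by (rule cls_of[OF T1 T0 nc'])
  have AB: "A \<inter> B = {}"
  proof (rule ccontr)
    assume "A \<inter> B \<noteq> {}"
    then obtain T where "(adj p)\<^sup>*\<^sup>* T0 T" "(adj p)\<^sup>*\<^sup>* T1 T" unfolding A_def B_def by blast
    then have "(adj p)\<^sup>*\<^sup>* T0 T1" using rtc_sym rtranclp_trans by metis
    then show False using nc by blast
  qed
  obtain \<rho> where r: "\<rho> > 0" "avoid p \<rho>" using radius[OF T0] by blast
  show False
  proof (cases "p \<in> \<Omega>")
    case True
    then show False using interior_case[OF clA r] by blast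
  next
    case False
    obtain Cs where Cs: "finite Cs" "pairwise disjnt Cs" "frontier \<Omega> = \<Union>Cs"
      "\<And>c. c \<in> Cs \<Longrightarrow> c homeomorphic sphere (0::pt) 1"
      using dom unfolding polygonal_domain_def by blast
    have clc: "closed c" if "c \<in> Cs" for c
    proof -
      have "compact (sphere (0::pt) 1)" by simp
      then have "compact c" using homeomorphic_compactness Cs(4)[OF that] by blast
      then show ?thesis by (rule compact_imp_closed)
    qed
    have "p \<in> closure \<Omega>" using cover T0 hull_inc[of p T0] by blast
    then have pf: "p \<in> frontier \<Omega>" using False omega_open unfolding frontier_def by (simp add: interior_open)
    then obtain c where c: "c \<in> Cs" "p \<in> c" using Cs(3) by blast
    have leg: "open_segment p q \<subseteq> c - {p} \<and> p \<in> closure (open_segment p q)"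
      if "cls p C" "q \<in> BE p C" for C q
    proof -
      have "q \<noteq> p" using that unfolding BE_def by blast
      have cl: "closure (open_segment p q) = closed_segment p q" using \<open>q \<noteq> p\<close> by simp
      have "closed_segment p q \<subseteq> frontier \<Omega>"
        using closure_minimal[OF BE_frontier[OF that] frontier_closed] cl by simp
      then have "closed_segment p q \<subseteq> c"
        using connected_in_one[OF Cs(1,2) clc connected_segment _ c(1), of p q p] Cs(3) c(2) by auto
      moreover have "open_segment p q \<subseteq> closed_segment p q - {p}" unfolding open_segment_def by blast
      ultimately show ?thesis using cl by auto
    qed
    have mem: "\<exists>T. T \<in> \<T> \<and> p \<in> T \<and> q \<in> T \<and> p \<noteq> q" if "cls p C" "q \<in> BE p C" for C q
      using BE_D[OF that] cls_sub[OF that(1)] by metis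
    obtain q1 q2 where q12: "q1 \<in> BE p A" "q2 \<in> BE p A" "q1 \<noteq> q2" using BE_two[OF clA r] by blast
    obtain q3 where q3: "q3 \<in> BE p B" using no_BE_false[OF clB r] by blast
    have q3ne: "q3 \<noteq> q" if qA: "q \<in> BE p A" for q
    proof
      assume "q3 = q"
      obtain T where T: "T \<in> A" "q \<in> T" "q \<noteq> p" using BE_D[OF clA qA] by blast
      obtain T' where T': "T' \<in> B" "q3 \<in> T'" using BE_D[OF clB q3] by blast
      have "adj p T T'" unfolding adj_def using cls_sub[OF clA T(1)] cls_sub[OF clB T'(1)] T T' \<open>q3 = q\<close> by blast
      then have "T' \<in> A" using clA T(1) unfolding cls_def by blast
      then show False using AB T'(1) by blast
    qed
    have d: "open_segment p qi \<inter> open_segment p qj = {}"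
      if h: "qi \<in> BE p Ci" "qj \<in> BE p Cj" "cls p Ci" "cls p Cj" "qi \<noteq> qj" for qi qj Ci Cj
    proof -
      obtain Ti where Ti: "Ti \<in> \<T>" "p \<in> Ti" "qi \<in> Ti" "p \<noteq> qi" using mem[OF h(3) h(1)] by blast
      obtain Tj where Tj: "Tj \<in> \<T>" "p \<in> Tj" "qj \<in> Tj" "p \<noteq> qj" using mem[OF h(4) h(2)] by blast
      show ?thesis by (rule legs_disjoint[OF Ti Tj h(5)])
    qed
    show False
    proof (rule no_triod[OF Cs(4)[OF c(1)] c(2)])
      show "open_segment p q1 \<subseteq> c - {p}" "p \<in> closure (open_segment p q1)" using leg[OF clA q12(1)] by auto
      show "open_segment p q2 \<subseteq> c - {p}" "p \<in> closure (open_segment p q2)" using leg[OF clA q12(2)] by auto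
      show "open_segment p q3 \<subseteq> c - {p}" "p \<in> closure (open_segment p q3)" using leg[OF clB q3] by auto
      show "convex (open_segment p q1)" "convex (open_segment p q2)" "convex (open_segment p q3)" by simp_all
      show "open_segment p q1 \<inter> open_segment p q2 = {}" by (rule d[OF q12(1,2) clA clA q12(3)])
      show "open_segment p q1 \<inter> open_segment p q3 = {}" using d[OF q12(1) q3 clA clB] q3ne[OF q12(1)] by metis
      show "open_segment p q2 \<inter> open_segment p q3 = {}" using d[OF q12(2) q3 clA clB] q3ne[OF q12(2)] by metis
    qed
  qed
qed

end

interpretation fs: vector_space fscale
  by unfold_locales (auto simp: fscale_def fun_eq_iff algebra_simps)

lemma sum_fun_apply: "(\<Sum>p\<in>P. (f p :: 'a \<Rightarrow> real)) i = (\<Sum>p\<in>P. f p i)"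
proof (induction P rule: infinite_finite_induct)
  case (infinite A) then show ?case by simp
next
  case empty then show ?case by simp
next
  case (insert x F) then show ?case by simp
qed

lemma fscale_apply[simp]: "fscale r f i = r * f i" by (simp add: fscale_def)

lemma line_lemma:
  fixes h0 h1 h2 ax ay bx bby :: real
  assumes ne: "(ax,ay) \<noteq> (bx,bby)" and hA: "h0 + h1*ax + h2*ay = 0" and hB: "h0 + h1*bx + h2*bby = 0"
  shows "\<exists>m. h0 + (bx*ay - bby*ax)*m = 0 \<and> h1 + (bby - ay)*m = 0 \<and> h2 + (ax - bx)*m = 0"
proof -
  have cr: "h1 * (bx - ax) + h2 * (bby - ay) = 0" using hA hB by (simp add: algebra_simps)
  show ?thesis
  proof (cases "bby - ay = 0")
    case False
    define m where "m = - h1 / (bby - ay)"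
    have 1: "h1 + (bby - ay)*m = 0" unfolding m_def using False by simp
    have "(bby - ay) * (h2 + (ax - bx)*m) = h2 * (bby - ay) - (ax - bx) * h1"
      unfolding m_def using False by (simp add: field_simps)
    also have "\<dots> = 0" using cr by (simp add: algebra_simps)
    finally have 2: "h2 + (ax - bx)*m = 0" using False by simp
    have "(bby - ay) * (h0 + (bx*ay - bby*ax)*m) = (bby - ay) * h0 - (bx*ay - bby*ax) * h1"
      unfolding m_def using False by (simp add: field_simps)
    also have "\<dots> = 0"
    proof -
      have h0: "h0 = - h1*ax - h2*ay" using hA by simp
      have "(bby - ay) * (- h1*ax - h2*ay) - (bx*ay - bby*ax) * h1 = - ay * (h1 * (bx - ax) + h2 * (bby - ay))"
        by (simp add: algebra_simps)
      then show ?thesis unfolding h0 using cr by simp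
    qed
    finally have 3: "h0 + (bx*ay - bby*ax)*m = 0" using False by simp
    show ?thesis using 1 2 3 by blast
  next
    case True
    then have by0: "bby = ay" by simp
    then have nx: "ax - bx \<noteq> 0" using ne by auto
    have h1: "h1 = 0" using cr by0 nx by simp
    define m where "m = - h2 / (ax - bx)"
    have 2: "h2 + (ax - bx)*m = 0" unfolding m_def using nx by simp
    have "h0 = - h2*ay" using hA h1 by simp
    then have 3: "h0 + (bx*ay - bby*ax)*m = 0" unfolding m_def by0 using nx
      by (simp add: field_simps)
    show ?thesis using 2 3 h1 by0 by auto
  qed
qed

lemma aff0:
  assumes o: "orient2d p q s \<noteq> 0"
    and "c0 + c1 * fst p + c2 * snd p = 0" "c0 + c1 * fst q + c2 * snd q = 0" "c0 + c1 * fst s + c2 * snd s = 0"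
  shows "c0 = 0 \<and> c1 = 0 \<and> c2 = 0"
proof -
  have e1: "c1 * (fst q - fst p) + c2 * (snd q - snd p) = 0" using assms by (simp add: algebra_simps)
  have e2: "c1 * (fst s - fst p) + c2 * (snd s - snd p) = 0" using assms by (simp add: algebra_simps)
  have "c1 * orient2d p q s = (snd s - snd p) * (c1 * (fst q - fst p) + c2 * (snd q - snd p)) - (snd q - snd p) * (c1 * (fst s - fst p) + c2 * (snd s - snd p))"
    unfolding orient2d_def by (simp add: algebra_simps)
  then have "c1 * orient2d p q s = 0" using e1 e2 by simp
  then have c1: "c1 = 0" using o by simp
  have "c2 * orient2d p q s = (fst q - fst p) * (c1 * (fst s - fst p) + c2 * (snd s - snd p)) - (fst s - fst p) * (c1 * (fst q - fst p) + c2 * (snd q - snd p))"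
    unfolding orient2d_def by (simp add: algebra_simps)
  then have "c2 * orient2d p q s = 0" using e1 e2 by simp
  then have c2: "c2 = 0" using o by simp
  show ?thesis using c1 c2 assms(2) by simp
qed


definition fv :: "(row_idx \<Rightarrow> real) \<Rightarrow> pt set \<Rightarrow> pt \<Rightarrow> real" where
  "fv v T x = v (Inl (T,0)) + v (Inl (T,1)) * fst x + v (Inl (T,2)) * snd x"

definition coefk :: "(pt set \<Rightarrow> pt \<times> pt) \<Rightarrow> pt set \<Rightarrow> nat \<Rightarrow> real" where
  "coefk ori e k = (if k = 0 then coef_c ori e else if k = 1 then coef_a ori e else coef_b ori e)"

lemma G_Inl: "G_mat \<sigma> ori (Inl (T,k')) (e,k) = (if k' = k then Delta_mat \<sigma> ori T e else 0)"
  by (simp add: G_mat_def)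

lemma G_Inr: "G_mat \<sigma> ori (Inr e') (e,k) = (if e' = e then coefk ori e k else 0)"
  by (simp add: G_mat_def coefk_def)

lemma line_A: "ori e = (A,B) \<Longrightarrow> coef_c ori e + coef_a ori e * fst A + coef_b ori e * snd A = 0"
  by (simp add: coef_a_def coef_b_def coef_c_def algebra_simps)
lemma line_B: "ori e = (A,B) \<Longrightarrow> coef_c ori e + coef_a ori e * fst B + coef_b ori e * snd B = 0"
  by (simp add: coef_a_def coef_b_def coef_c_def algebra_simps)

context mesh
begin

lemma fin_IE: "finite (internal_edges \<T>)"
proof -
  have "finite (\<Union>\<T>)" using fin fin_tri by blast
  moreover have "internal_edges \<T> \<subseteq> Pow (\<Union>\<T>)" unfolding internal_edges_def mesh_edges_def by blast
  ultimately show ?thesis by (meson finite_Pow_iff finite_subset)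
qed

lemma KS:
  assumes k: "k \<in> {0,1,2}"
  shows "(\<Sum>i\<in>G_rows \<T>. G_mat \<sigma> ori i (e,k) * v i)
     = (\<Sum>T\<in>\<T>. Delta_mat \<sigma> ori T e * v (Inl (T,k))) + (if e \<in> internal_edges \<T> then coefk ori e k * v (Inr e) else 0)"
proof -
  have f1: "finite (Inl ` (\<T> \<times> {0,1,2::nat}) :: row_idx set)" using fin by simp
  have f2: "finite (Inr ` internal_edges \<T> :: row_idx set)" using fin_IE by simp
  have dj: "(Inl ` (\<T> \<times> {0,1,2::nat}) :: row_idx set) \<inter> Inr ` internal_edges \<T> = {}" by auto
  have "(\<Sum>i\<in>G_rows \<T>. G_mat \<sigma> ori i (e,k) * v i)
      = (\<Sum>i\<in>Inl ` (\<T> \<times> {0,1,2}). G_mat \<sigma> ori i (e,k) * v i) + (\<Sum>i\<in>Inr ` internal_edges \<T>. G_mat \<sigma> ori i (e,k) * v i)"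
    unfolding G_rows_def by (rule sum.union_disjoint[OF f1 f2 dj])
  also have "(\<Sum>i\<in>Inl ` (\<T> \<times> {0,1,2}). G_mat \<sigma> ori i (e,k) * v i) = (\<Sum>x\<in>\<T> \<times> {0,1,2}. G_mat \<sigma> ori (Inl x) (e,k) * v (Inl x))"
    by (subst sum.reindex) (auto simp: inj_on_def)
  also have "\<dots> = (\<Sum>T\<in>\<T>. \<Sum>k'\<in>{0,1,2}. G_mat \<sigma> ori (Inl (T,k')) (e,k) * v (Inl (T,k')))"
    unfolding sum.cartesian_product by (simp add: case_prod_unfold)
  also have "\<dots> = (\<Sum>T\<in>\<T>. Delta_mat \<sigma> ori T e * v (Inl (T,k)))"
    by (rule sum.cong) (use k in \<open>auto simp: G_Inl\<close>)
  also have "(\<Sum>i\<in>Inr ` internal_edges \<T>. G_mat \<sigma> ori i (e,k) * v i) = (\<Sum>e'\<in>internal_edges \<T>. G_mat \<sigma> ori (Inr e') (e,k) * v (Inr e'))"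
    by (subst sum.reindex) (auto simp: inj_on_def)
  also have "\<dots> = (\<Sum>e'\<in>internal_edges \<T>. if e' = e then coefk ori e k * v (Inr e) else 0)"
    by (rule sum.cong) (auto simp: G_Inr)
  also have "\<dots> = (if e \<in> internal_edges \<T> then coefk ori e k * v (Inr e) else 0)"
    using fin_IE by (simp add: sum.delta)
  finally show ?thesis .
qed

lemma Keq:
  assumes "v \<in> left_kernel_G \<T> \<sigma> ori" "e \<in> internal_edges \<T>" "k \<in> {0,1,2}"
  shows "(\<Sum>T\<in>\<T>. Delta_mat \<sigma> ori T e * v (Inl (T,k))) + coefk ori e k * v (Inr e) = 0"
proof -
  have "(e,k) \<in> G_cols \<T>" using assms(2,3) unfolding G_cols_def by blast
  then have "(\<Sum>i\<in>G_rows \<T>. G_mat \<sigma> ori i (e,k) * v i) = 0" using assms(1) unfolding left_kernel_G_def by blast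
  then show ?thesis using KS[OF assms(3), of e v] assms(2) by simp
qed

lemma Kmem:
  assumes "\<And>i. i \<notin> G_rows \<T> \<Longrightarrow> v i = 0"
    and "\<And>e k. e \<in> internal_edges \<T> \<Longrightarrow> k \<in> {0,1,2} \<Longrightarrow> (\<Sum>T\<in>\<T>. Delta_mat \<sigma> ori T e * v (Inl (T,k))) + coefk ori e k * v (Inr e) = 0"
  shows "v \<in> left_kernel_G \<T> \<sigma> ori"
  unfolding left_kernel_G_def
proof (intro CollectI conjI allI impI ballI)
  fix i assume "i \<notin> G_rows \<T>" then show "v i = 0" using assms(1) by blast
next
  fix j assume "j \<in> G_cols \<T>"
  then obtain e k where j: "j = (e,k)" "e \<in> internal_edges \<T>" "k \<in> {0,1,2}" unfolding G_cols_def by blast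
  show "(\<Sum>i\<in>G_rows \<T>. G_mat \<sigma> ori i j * v i) = 0" unfolding j(1) using KS[OF j(3), of e v] assms(2)[OF j(2,3)] j(2) by simp
qed

lemma sgn_opp: "(a::real) * b < 0 \<Longrightarrow> sgn b = - sgn a \<and> sgn a \<noteq> 0"
  by (auto simp: mult_less_0_iff)

lemma edge_info:
  assumes e: "e \<in> internal_edges \<T>"
  shows "\<exists>T1 T2 A B. T1 \<in> \<T> \<and> T2 \<in> \<T> \<and> T1 \<noteq> T2 \<and> {T\<in>\<T>. e \<subseteq> T} = {T1,T2} \<and> ori e = (A,B) \<and> e = {A,B}
     \<and> A \<noteq> B \<and> Delta_mat \<sigma> ori T2 e = - Delta_mat \<sigma> ori T1 e \<and> Delta_mat \<sigma> ori T1 e \<noteq> 0"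
proof -
  have me: "e \<in> mesh_edges \<T>" and c2: "card {T\<in>\<T>. e \<subseteq> T} = 2" using e unfolding internal_edges_def by auto
  obtain T1 T2 where TT: "{T\<in>\<T>. e \<subseteq> T} = {T1,T2}" "T1 \<noteq> T2" using c2 card_2_iff by metis
  have T1: "T1 \<in> \<T>" "e \<subseteq> T1" and T2: "T2 \<in> \<T>" "e \<subseteq> T2" using TT(1) by blast+
  obtain A B where AB: "ori e = (A,B)" by (cases "ori e")
  have eAB: "e = {A,B}" using oriok me AB unfolding edge_orientation_def by force
  have "card e = 2" using me unfolding mesh_edges_def by blast
  then have AneB: "A \<noteq> B" using eAB by (metis card_1_singleton_iff insert_absorb2 numeral_One numeral_eq_iff semiring_norm(85) One_nat_def)
  obtain s1 where s1: "T1 = {A,B,s1}" "s1 \<noteq> A" "s1 \<noteq> B" "orient2d A B s1 \<noteq> 0"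
    using third_vertex[OF T1(1) _ _ AneB] T1(2) eAB by blast
  obtain s2 where s2: "T2 = {A,B,s2}" "s2 \<noteq> A" "s2 \<noteq> B" "orient2d A B s2 \<noteq> 0"
    using third_vertex[OF T2(1) _ _ AneB] T2(2) eAB by blast
  have "s1 \<noteq> s2" using s1(1) s2(1) TT(2) by blast
  have opp: "orient2d A B s1 * orient2d A B s2 < 0"
    by (rule opp_sides) (use T1 T2 s1 s2 AneB \<open>s1 \<noteq> s2\<close> in auto)
  have d1: "T1 - e = {s1}" using s1 eAB by auto
  have d2: "T2 - e = {s2}" using s2 eAB by auto
  have D1: "Delta_mat \<sigma> ori T1 e = \<sigma> * sgn (orient2d A B s1)"
    unfolding Delta_mat_def delta_def using T1(2) d1 AB by simp
  have D2: "Delta_mat \<sigma> ori T2 e = \<sigma> * sgn (orient2d A B s2)"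
    unfolding Delta_mat_def delta_def using T2(2) d2 AB by simp
  have "\<sigma> \<noteq> 0" using sig by auto
  then have "Delta_mat \<sigma> ori T2 e = - Delta_mat \<sigma> ori T1 e \<and> Delta_mat \<sigma> ori T1 e \<noteq> 0"
    unfolding D1 D2 using sgn_opp[OF opp] by simp
  then show ?thesis using T1(1) T2(1) TT AB eAB AneB by blast
qed

lemma sum_delta_edge:
  assumes "T1 \<in> \<T>" "T2 \<in> \<T>" "T1 \<noteq> T2" "{T\<in>\<T>. e \<subseteq> T} = {T1,T2}"
    "Delta_mat \<sigma> ori T2 e = - Delta_mat \<sigma> ori T1 e"
  shows "(\<Sum>T\<in>\<T>. Delta_mat \<sigma> ori T e * w T) = Delta_mat \<sigma> ori T1 e * (w T1 - w T2)"
proof -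
  have "(\<Sum>T\<in>\<T>. Delta_mat \<sigma> ori T e * w T) = (\<Sum>T\<in>{T1,T2}. Delta_mat \<sigma> ori T e * w T)"
  proof (rule sum.mono_neutral_right[OF fin])
    show "{T1,T2} \<subseteq> \<T>" using assms by blast
    show "\<forall>T\<in>\<T> - {T1,T2}. Delta_mat \<sigma> ori T e * w T = 0"
    proof
      fix T assume "T \<in> \<T> - {T1,T2}"
      then have "\<not> e \<subseteq> T" using assms(4) by blast
      then show "Delta_mat \<sigma> ori T e * w T = 0" unfolding Delta_mat_def by simp
    qed
  qed
  also have "\<dots> = Delta_mat \<sigma> ori T1 e * w T1 + Delta_mat \<sigma> ori T2 e * w T2" using assms(3) by simp
  finally show ?thesis using assms(5) by (simp add: algebra_simps)
qed

end

context mesh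
begin

lemma K_agree:
  assumes v: "v \<in> left_kernel_G \<T> \<sigma> ori" and T: "T \<in> \<T>" "T' \<in> \<T>" "T \<noteq> T'"
    and m: "p \<in> T" "q \<in> T" "p \<in> T'" "q \<in> T'" "p \<noteq> q"
  shows "fv v T p = fv v T' p"
proof -
  note ie = internal_edge_I[OF T m(1,2,3,4,5)]
  obtain T1 T2 A B where I: "T1 \<in> \<T>" "T2 \<in> \<T>" "T1 \<noteq> T2" "{T\<in>\<T>. {p,q} \<subseteq> T} = {T1,T2}" "ori {p,q} = (A,B)"
    "{p,q} = {A,B}" "A \<noteq> B" "Delta_mat \<sigma> ori T2 {p,q} = - Delta_mat \<sigma> ori T1 {p,q}" "Delta_mat \<sigma> ori T1 {p,q} \<noteq> 0"
    using edge_info[OF ie(1)] by blast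
  define d where "d = Delta_mat \<sigma> ori T1 {p,q}"
  define \<mu> where "\<mu> = v (Inr {p,q})"
  have eq: "d * (v (Inl (T1,k)) - v (Inl (T2,k))) + coefk ori {p,q} k * \<mu> = 0" if "k \<in> {0,1,2}" for k
    using Keq[OF v ie(1) that] sum_delta_edge[OF I(1,2,3,4,8), of "\<lambda>T. v (Inl (T,k))"] unfolding d_def \<mu>_def by simp
  have line: "coef_c ori {p,q} + coef_a ori {p,q} * fst p + coef_b ori {p,q} * snd p = 0"
  proof -
    have "p = A \<or> p = B" using I(6) by blast
    then show ?thesis using line_A[of ori "{p,q}" A B, OF I(5)] line_B[of ori "{p,q}" A B, OF I(5)] by blast
  qed
  have e0: "d * (v (Inl (T1,0)) - v (Inl (T2,0))) + coef_c ori {p,q} * \<mu> = 0" using eq[of 0] by (simp add: coefk_def)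
  have e1: "d * (v (Inl (T1,1)) - v (Inl (T2,1))) + coef_a ori {p,q} * \<mu> = 0" using eq[of 1] by (simp add: coefk_def)
  have e2: "d * (v (Inl (T1,2)) - v (Inl (T2,2))) + coef_b ori {p,q} * \<mu> = 0" using eq[of 2] by (simp add: coefk_def)
  have "d * (fv v T1 p - fv v T2 p) = (d * (v (Inl (T1,0)) - v (Inl (T2,0))) + coef_c ori {p,q} * \<mu>)
      + (d * (v (Inl (T1,1)) - v (Inl (T2,1))) + coef_a ori {p,q} * \<mu>) * fst p
      + (d * (v (Inl (T1,2)) - v (Inl (T2,2))) + coef_b ori {p,q} * \<mu>) * snd p
      - \<mu> * (coef_c ori {p,q} + coef_a ori {p,q} * fst p + coef_b ori {p,q} * snd p)"
    unfolding fv_def by (simp add: algebra_simps)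
  also have "\<dots> = 0" unfolding e0 e1 e2 line by simp
  finally have "fv v T1 p = fv v T2 p" using I(9) unfolding d_def by simp
  moreover have "(T1 = T \<and> T2 = T') \<or> (T1 = T' \<and> T2 = T)" using I(3,4) ie(2) by (metis doubleton_eq_iff)
  ultimately show ?thesis by metis
qed

lemma fan_eq:
  assumes v: "v \<in> left_kernel_G \<T> \<sigma> ori" and T: "T0 \<in> \<T>" "p \<in> T0" "T \<in> \<T>" "p \<in> T"
  shows "fv v T0 p = fv v T p"
proof -
  have "(adj p)\<^sup>*\<^sup>* T0 T" by (rule fan[OF T])
  then show ?thesis
  proof (induction rule: rtranclp_induct)
    case base then show ?case by simp
  next
    case (step y z)
    from step(2) obtain q where yz: "y \<in> \<T>" "z \<in> \<T>" "p \<in> y" "p \<in> z" "q \<noteq> p" "q \<in> y" "q \<in> z"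
      unfolding adj_def by blast
    have "fv v y p = fv v z p"
    proof (cases "y = z")
      case True then show ?thesis by simp
    next
      case False then show ?thesis using K_agree[OF v yz(1,2) False yz(3,6,4,7)] yz(5) by metis
    qed
    then show ?case using step(3) by simp
  qed
qed

lemma K_zero:
  assumes v: "v \<in> left_kernel_G \<T> \<sigma> ori" and z: "\<And>T k. T \<in> \<T> \<Longrightarrow> k \<in> {0,1,2} \<Longrightarrow> v (Inl (T,k)) = 0"
  shows "v = 0"
proof
  fix i
  show "v i = 0 i"
  proof (cases "i \<in> G_rows \<T>")
    case False then show ?thesis using v unfolding left_kernel_G_def by simp
  next
    case True
    then consider T k where "i = Inl (T,k)" "T \<in> \<T>" "k \<in> {0,1,2}" | e where "i = Inr e" "e \<in> internal_edges \<T>"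
      unfolding G_rows_def by blast
    then show ?thesis
    proof cases
      case 1 then show ?thesis using z by simp
    next
      case 2
      have s0: "(\<Sum>T\<in>\<T>. Delta_mat \<sigma> ori T e * v (Inl (T,k))) = 0" if "k \<in> {0,1,2}" for k
        using z that by simp
      have a: "coef_a ori e * v (Inr e) = 0" using Keq[OF v 2(2), of 1] s0[of 1] by (simp add: coefk_def)
      have b: "coef_b ori e * v (Inr e) = 0" using Keq[OF v 2(2), of 2] s0[of 2] by (simp add: coefk_def)
      obtain T1 T2 A B where I: "ori e = (A,B)" "A \<noteq> B"
        using edge_info[OF 2(2)] by blast
      have "coef_a ori e \<noteq> 0 \<or> coef_b ori e \<noteq> 0"
        using I unfolding coef_a_def coef_b_def by (auto simp: prod_eq_iff)
      then have "v (Inr e) = 0" using a b by auto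
      then show ?thesis using 2(1) by simp
    qed
  qed
qed

lemma K_exists:
  fixes u :: "pt set \<Rightarrow> nat \<Rightarrow> real"
  assumes agree: "\<And>T T' x q. T \<in> \<T> \<Longrightarrow> T' \<in> \<T> \<Longrightarrow> T \<noteq> T' \<Longrightarrow> x \<in> T \<Longrightarrow> q \<in> T \<Longrightarrow> x \<in> T' \<Longrightarrow> q \<in> T' \<Longrightarrow> x \<noteq> q
     \<Longrightarrow> u T 0 + u T 1 * fst x + u T 2 * snd x = u T' 0 + u T' 1 * fst x + u T' 2 * snd x"
  shows "\<exists>v\<in>left_kernel_G \<T> \<sigma> ori. \<forall>T\<in>\<T>. \<forall>k\<in>{0,1,2}. v (Inl (T,k)) = u T k"
proof -
  have ex: "\<exists>m. \<forall>k\<in>{0,1,2}. (\<Sum>T\<in>\<T>. Delta_mat \<sigma> ori T e * u T k) + coefk ori e k * m = 0"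
    if e: "e \<in> internal_edges \<T>" for e
  proof -
    obtain T1 T2 A B where I: "T1 \<in> \<T>" "T2 \<in> \<T>" "T1 \<noteq> T2" "{T\<in>\<T>. e \<subseteq> T} = {T1,T2}" "ori e = (A,B)"
      "e = {A,B}" "A \<noteq> B" "Delta_mat \<sigma> ori T2 e = - Delta_mat \<sigma> ori T1 e"
      using edge_info[OF e] by blast
    define d where "d = Delta_mat \<sigma> ori T1 e"
    define h where "h k = d * (u T1 k - u T2 k)" for k
    have S: "(\<Sum>T\<in>\<T>. Delta_mat \<sigma> ori T e * u T k) = h k" for k
      using sum_delta_edge[OF I(1-4,8), of "\<lambda>T. u T k"] unfolding h_def d_def by simp
    have AB: "A \<in> T1" "B \<in> T1" "A \<in> T2" "B \<in> T2" using I(4,6) by blast+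
    have hA: "h 0 + h 1 * fst A + h 2 * snd A = 0"
    proof -
      have "h 0 + h 1 * fst A + h 2 * snd A = d * ((u T1 0 + u T1 1 * fst A + u T1 2 * snd A) - (u T2 0 + u T2 1 * fst A + u T2 2 * snd A))"
        unfolding h_def by (simp add: algebra_simps)
      then show ?thesis using agree[OF I(1,2,3) AB(1,2,3,4) I(7)] by simp
    qed
    have hB: "h 0 + h 1 * fst B + h 2 * snd B = 0"
    proof -
      have "h 0 + h 1 * fst B + h 2 * snd B = d * ((u T1 0 + u T1 1 * fst B + u T1 2 * snd B) - (u T2 0 + u T2 1 * fst B + u T2 2 * snd B))"
        unfolding h_def by (simp add: algebra_simps)
      then show ?thesis using agree[OF I(1,2,3) AB(2,1,4,3)] I(7) by simp
    qed
    have ne: "(fst A, snd A) \<noteq> (fst B, snd B)" using I(7) by (simp add: prod_eq_iff)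
    obtain m where m: "h 0 + (fst B * snd A - snd B * fst A) * m = 0" "h 1 + (snd B - snd A) * m = 0" "h 2 + (fst A - fst B) * m = 0"
      using line_lemma[OF ne hA hB] by blast
    have "\<forall>k\<in>{0,1,2}. (\<Sum>T\<in>\<T>. Delta_mat \<sigma> ori T e * u T k) + coefk ori e k * m = 0"
      unfolding S using m I(5) by (auto simp: coefk_def coef_a_def coef_b_def coef_c_def)
    then show ?thesis by blast
  qed
  then obtain \<mu> where \<mu>: "\<And>e k. e \<in> internal_edges \<T> \<Longrightarrow> k \<in> {0,1,2} \<Longrightarrow> (\<Sum>T\<in>\<T>. Delta_mat \<sigma> ori T e * u T k) + coefk ori e k * \<mu> e = 0"
    by metis
  define v :: "row_idx \<Rightarrow> real" where "v i = (case i of Inl (T,k) \<Rightarrow> if T \<in> \<T> \<and> k \<in> {0,1,2} then u T k else 0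
      | Inr e \<Rightarrow> if e \<in> internal_edges \<T> then \<mu> e else 0)" for i
  have "v \<in> left_kernel_G \<T> \<sigma> ori"
  proof (rule Kmem)
    fix i assume "i \<notin> G_rows \<T>"
    then show "v i = 0" unfolding v_def G_rows_def by (cases i) auto
  next
    fix e and k :: nat assume ek: "e \<in> internal_edges \<T>" "k \<in> {0,1,2}"
    have "(\<Sum>T\<in>\<T>. Delta_mat \<sigma> ori T e * v (Inl (T,k))) = (\<Sum>T\<in>\<T>. Delta_mat \<sigma> ori T e * u T k)"
      by (rule sum.cong) (use ek in \<open>auto simp: v_def\<close>)
    then show "(\<Sum>T\<in>\<T>. Delta_mat \<sigma> ori T e * v (Inl (T,k))) + coefk ori e k * v (Inr e) = 0"
      using \<mu>[OF ek] ek by (simp add: v_def)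
  qed
  moreover have "\<forall>T\<in>\<T>. \<forall>k\<in>{0,1,2}. v (Inl (T,k)) = u T k" unfolding v_def by auto
  ultimately show ?thesis by blast
qed

lemma K_subspace: "fs.subspace (left_kernel_G \<T> \<sigma> ori)"
proof (rule fs.subspaceI)
  show "0 \<in> left_kernel_G \<T> \<sigma> ori" by (rule Kmem) simp_all
next
  fix x y assume x: "x \<in> left_kernel_G \<T> \<sigma> ori" and y: "y \<in> left_kernel_G \<T> \<sigma> ori"
  show "x + y \<in> left_kernel_G \<T> \<sigma> ori"
  proof (rule Kmem)
    fix i assume "i \<notin> G_rows \<T>" then show "(x + y) i = 0" using x y unfolding left_kernel_G_def by simp
  next
    fix e and k :: nat assume ek: "e \<in> internal_edges \<T>" "k \<in> {0,1,2}"
    have "(\<Sum>T\<in>\<T>. Delta_mat \<sigma> ori T e * (x + y) (Inl (T,k))) + coefk ori e k * (x + y) (Inr e)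
      = ((\<Sum>T\<in>\<T>. Delta_mat \<sigma> ori T e * x (Inl (T,k))) + coefk ori e k * x (Inr e))
       + ((\<Sum>T\<in>\<T>. Delta_mat \<sigma> ori T e * y (Inl (T,k))) + coefk ori e k * y (Inr e))"
      by (simp add: distrib_left sum.distrib algebra_simps)
    then show "(\<Sum>T\<in>\<T>. Delta_mat \<sigma> ori T e * (x + y) (Inl (T,k))) + coefk ori e k * (x + y) (Inr e) = 0"
      using Keq[OF x ek] Keq[OF y ek] by simp
  qed
next
  fix c x assume x: "x \<in> left_kernel_G \<T> \<sigma> ori"
  show "fscale c x \<in> left_kernel_G \<T> \<sigma> ori"
  proof (rule Kmem)
    fix i assume "i \<notin> G_rows \<T>" then show "fscale c x i = 0" using x unfolding left_kernel_G_def by simp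
  next
    fix e and k :: nat assume ek: "e \<in> internal_edges \<T>" "k \<in> {0,1,2}"
    have "(\<Sum>T\<in>\<T>. Delta_mat \<sigma> ori T e * fscale c x (Inl (T,k))) + coefk ori e k * fscale c x (Inr e)
      = c * ((\<Sum>T\<in>\<T>. Delta_mat \<sigma> ori T e * x (Inl (T,k))) + coefk ori e k * x (Inr e))"
      by (simp add: distrib_left sum_distrib_left algebra_simps)
    then show "(\<Sum>T\<in>\<T>. Delta_mat \<sigma> ori T e * fscale c x (Inl (T,k))) + coefk ori e k * fscale c x (Inr e) = 0"
      using Keq[OF x ek] by simp
  qed
qed

end

definition ock :: "pt \<Rightarrow> pt \<Rightarrow> nat \<Rightarrow> real" where
  "ock q s k = (if k = 0 then (snd s - snd q) * fst q - (fst s - fst q) * snd q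
     else if k = 1 then - (snd s - snd q) else fst s - fst q)"

lemma ock_eval: "ock q s 0 + ock q s 1 * fst x + ock q s 2 * snd x = orient2d q s x"
  by (simp add: ock_def orient2d_def algebra_simps)

definition hatc :: "pt set \<Rightarrow> pt \<Rightarrow> nat \<Rightarrow> real" where
  "hatc T p k = (if p \<in> T then (let qs = SOME qs. T = {p, fst qs, snd qs} \<and> p \<noteq> fst qs \<and> p \<noteq> snd qs \<and> fst qs \<noteq> snd qs
      in ock (fst qs) (snd qs) k / orient2d (fst qs) (snd qs) p) else 0)"

lemma fv_sum: "fv (\<Sum>p\<in>P. fscale (c p) (f p)) T x = (\<Sum>p\<in>P. c p * fv (f p) T x)"
  unfolding fv_def sum_fun_apply fscale_apply by (simp add: sum.distrib sum_distrib_left sum_distrib_right algebra_simps)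

lemma fv_diff: "fv (v - w) T x = fv v T x - fv w T x"
  unfolding fv_def by (simp add: algebra_simps)

context mesh
begin

lemma hat_eval:
  assumes T: "T \<in> \<T>" "x \<in> T"
  shows "hatc T p 0 + hatc T p 1 * fst x + hatc T p 2 * snd x = (if x = p then 1 else 0)"
proof (cases "p \<in> T")
  case False
  then show ?thesis using T(2) unfolding hatc_def by auto
next
  case True
  define P where "P = (\<lambda>qs. T = {p, fst qs, snd qs} \<and> p \<noteq> fst qs \<and> p \<noteq> snd qs \<and> fst qs \<noteq> snd qs)"
  obtain q s where "T = {p,q,s}" "p \<noteq> q" "p \<noteq> s" "q \<noteq> s" using tri_enum[OF T(1) True] by blast
  then have "P (q,s)" unfolding P_def by simp
  then have Ps: "P (SOME qs. P qs)" by (rule someI)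
  define q' where "q' = fst (SOME qs. P qs)"
  define s' where "s' = snd (SOME qs. P qs)"
  have qs': "T = {p,q',s'}" "p \<noteq> q'" "p \<noteq> s'" "q' \<noteq> s'" using Ps unfolding P_def q'_def s'_def by auto
  have o: "orient2d q' s' p \<noteq> 0"
  proof -
    have "orient2d p q' s' \<noteq> 0" using orient_ne[OF T(1) qs'] by blast
    moreover have "orient2d q' s' p = orient2d p q' s'" by (simp add: orient2d_def algebra_simps)
    ultimately show ?thesis by simp
  qed
  have h: "hatc T p k = ock q' s' k / orient2d q' s' p" for k
    unfolding hatc_def q'_def s'_def using True unfolding P_def[symmetric] by (simp add: Let_def)
  have "hatc T p 0 + hatc T p 1 * fst x + hatc T p 2 * snd x = orient2d q' s' x / orient2d q' s' p"
    unfolding h ock_eval[symmetric] by (simp add: add_divide_distrib)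
  moreover have "x = p \<or> x = q' \<or> x = s'" using T(2) qs'(1) by blast
  moreover have "orient2d q' s' q' = 0" "orient2d q' s' s' = 0" by (simp_all add: orient2d_def)
  ultimately show ?thesis using o qs' by auto
qed

definition phi :: "pt \<Rightarrow> row_idx \<Rightarrow> real" where
  "phi p = (SOME v. v \<in> left_kernel_G \<T> \<sigma> ori \<and> (\<forall>T\<in>\<T>. \<forall>k\<in>{0,1,2}. v (Inl (T,k)) = hatc T p k))"

lemma phi_prop: "phi p \<in> left_kernel_G \<T> \<sigma> ori \<and> (\<forall>T\<in>\<T>. \<forall>k\<in>{0,1,2}. phi p (Inl (T,k)) = hatc T p k)"
proof -
  have "\<exists>v\<in>left_kernel_G \<T> \<sigma> ori. \<forall>T\<in>\<T>. \<forall>k\<in>{0,1,2}. v (Inl (T,k)) = hatc T p k"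
  proof (rule K_exists)
    fix T T' x q assume a: "T \<in> \<T>" "T' \<in> \<T>" "T \<noteq> T'" "x \<in> T" "q \<in> T" "x \<in> T'" "q \<in> T'" "x \<noteq> q"
    show "hatc T p 0 + hatc T p 1 * fst x + hatc T p 2 * snd x = hatc T' p 0 + hatc T' p 1 * fst x + hatc T' p 2 * snd x"
      using hat_eval[OF a(1,4)] hat_eval[OF a(2,6)] by simp
  qed
  then show ?thesis unfolding phi_def by (rule someI2_bex) blast
qed

lemma phi_eval:
  assumes "T \<in> \<T>" "x \<in> T"
  shows "fv (phi p) T x = (if x = p then 1 else 0)"
  unfolding fv_def using phi_prop[of p] hat_eval[OF assms, of p] assms(1) by simp

end

context mesh
begin

lemma V_fin: "finite (mesh_vertices \<T>)"
  unfolding mesh_vertices_def using fin fin_tri by blast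

lemma delta_sum:
  assumes "finite P" "q \<in> P"
  shows "(\<Sum>p\<in>P. c p * (if q = p then 1 else 0)) = (c q :: real)"
proof -
  have "(\<Sum>p\<in>P. c p * (if q = p then 1 else 0)) = (\<Sum>p\<in>P. if q = p then c p else 0)"
    by (rule sum.cong) auto
  also have "\<dots> = c q" using assms by (simp add: sum.delta)
  finally show ?thesis .
qed

lemma phi_inj: "inj_on phi (mesh_vertices \<T>)"
proof
  fix p p' assume p: "p \<in> mesh_vertices \<T>" "p' \<in> mesh_vertices \<T>" and eq: "phi p = phi p'"
  obtain T where T: "T \<in> \<T>" "p \<in> T" using p(1) unfolding mesh_vertices_def by blast
  have "fv (phi p) T p = 1" using phi_eval[OF T] by simp
  moreover have "fv (phi p') T p = (if p = p' then 1 else 0)" using phi_eval[OF T] by simp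
  ultimately show "p = p'" using eq by (metis zero_neq_one)
qed

lemma phi_indep: "\<not> fs.dependent (phi ` mesh_vertices \<T>)"
proof
  assume "fs.dependent (phi ` mesh_vertices \<T>)"
  then obtain u where u: "\<exists>w\<in>phi ` mesh_vertices \<T>. u w \<noteq> 0" "(\<Sum>w\<in>phi ` mesh_vertices \<T>. fscale (u w) w) = 0"
    unfolding fs.dependent_finite[OF finite_imageI[OF V_fin]] by blast
  have s: "(\<Sum>p\<in>mesh_vertices \<T>. fscale (u (phi p)) (phi p)) = 0"
    using u(2) unfolding sum.reindex[OF phi_inj] by (simp add: o_def)
  have "u (phi q) = 0" if q: "q \<in> mesh_vertices \<T>" for q
  proof -
    obtain T where T: "T \<in> \<T>" "q \<in> T" using q unfolding mesh_vertices_def by blast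
    have "fv (\<Sum>p\<in>mesh_vertices \<T>. fscale (u (phi p)) (phi p)) T q = (\<Sum>p\<in>mesh_vertices \<T>. u (phi p) * fv (phi p) T q)"
      by (rule fv_sum)
    also have "\<dots> = (\<Sum>p\<in>mesh_vertices \<T>. u (phi p) * (if q = p then 1 else 0))"
      by (rule sum.cong) (use phi_eval[OF T] in auto)
    also have "\<dots> = u (phi q)" by (rule delta_sum[OF V_fin q])
    finally show ?thesis unfolding s by (simp add: fv_def)
  qed
  then show False using u(1) by blast
qed

lemma span_sub: "fs.span (phi ` mesh_vertices \<T>) \<subseteq> left_kernel_G \<T> \<sigma> ori"
  by (rule fs.span_minimal[OF _ K_subspace]) (use phi_prop in blast)

lemma phi_span: "fs.span (phi ` mesh_vertices \<T>) = left_kernel_G \<T> \<sigma> ori"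
proof
  show "fs.span (phi ` mesh_vertices \<T>) \<subseteq> left_kernel_G \<T> \<sigma> ori" by (rule span_sub)
next
  show "left_kernel_G \<T> \<sigma> ori \<subseteq> fs.span (phi ` mesh_vertices \<T>)"
  proof
    fix v assume v: "v \<in> left_kernel_G \<T> \<sigma> ori"
    define g where "g q = fv v (SOME T. T \<in> \<T> \<and> q \<in> T) q" for q
    define w where "w = (\<Sum>p\<in>mesh_vertices \<T>. fscale (g p) (phi p))"
    have wspan: "w \<in> fs.span (phi ` mesh_vertices \<T>)" unfolding w_def
      by (intro fs.span_sum fs.span_scale fs.span_base) auto
    have wK: "w \<in> left_kernel_G \<T> \<sigma> ori"
      using wspan span_sub by blast
    have dK: "v - w \<in> left_kernel_G \<T> \<sigma> ori" by (rule fs.subspace_diff[OF K_subspace v wK])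
    have "v - w = 0"
    proof (rule K_zero[OF dK])
      fix T and k :: nat assume T: "T \<in> \<T>" "k \<in> {0,1,2}"
      have z: "fv (v - w) T x = 0" if x: "x \<in> T" for x
      proof -
        have xV: "x \<in> mesh_vertices \<T>" using T(1) x unfolding mesh_vertices_def by blast
        have "fv w T x = (\<Sum>p\<in>mesh_vertices \<T>. g p * fv (phi p) T x)" unfolding w_def by (rule fv_sum)
        also have "\<dots> = (\<Sum>p\<in>mesh_vertices \<T>. g p * (if x = p then 1 else 0))"
          by (rule sum.cong) (use phi_eval[OF T(1) x] in auto)
        also have "\<dots> = g x" by (rule delta_sum[OF V_fin xV])
        also have "g x = fv v T x"
        proof -
          have "\<exists>T. T \<in> \<T> \<and> x \<in> T" using T(1) x by blast
          then have S: "(SOME T. T \<in> \<T> \<and> x \<in> T) \<in> \<T> \<and> x \<in> (SOME T. T \<in> \<T> \<and> x \<in> T)" by (rule someI_ex)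
          show ?thesis unfolding g_def using fan_eq[OF v S[THEN conjunct1] S[THEN conjunct2] T(1) x] .
        qed
        finally show ?thesis unfolding fv_diff by simp
      qed
      obtain a b c where abc: "T = {a,b,c}" "a \<noteq> b" "a \<noteq> c" "b \<noteq> c" "orient2d a b c \<noteq> 0"
        using tri_enum[OF T(1)] card3[OF T(1)] by (metis card_3_iff insertI1)
      have "(v - w) (Inl (T,0)) = 0 \<and> (v - w) (Inl (T,1)) = 0 \<and> (v - w) (Inl (T,2)) = 0"
        by (rule aff0[OF abc(5)]) (use z abc(1) in \<open>auto simp: fv_def\<close>)
      then show "(v - w) (Inl (T,k)) = 0" using T(2) by auto
    qed
    then have "v = w" by simp
    then show "v \<in> fs.span (phi ` mesh_vertices \<T>)" using wspan by simp
  qed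
qed

lemma dim_K: "fs.dim (left_kernel_G \<T> \<sigma> ori) = card (mesh_vertices \<T>)"
proof -
  have "fs.span (phi ` mesh_vertices \<T>) = fs.span (left_kernel_G \<T> \<sigma> ori)"
  proof -
    have eqK: "fs.span (left_kernel_G \<T> \<sigma> ori) = left_kernel_G \<T> \<sigma> ori" using K_subspace fs.span_eq_iff by blast
    show ?thesis by (simp only: eqK phi_span)
  qed
  then have "fs.dim (left_kernel_G \<T> \<sigma> ori) = card (phi ` mesh_vertices \<T>)"
    by (rule fs.dim_eq_card[OF _ phi_indep])
  also have "\<dots> = card (mesh_vertices \<T>)" by (rule card_image[OF phi_inj])
  finally show ?thesis .
qed

lemma card_split: "card (internal_vertices \<Omega> \<T>) + card (boundary_vertices \<Omega> \<T>) = card (mesh_vertices \<T>)"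
proof -
  have sub: "mesh_vertices \<T> \<subseteq> closure \<Omega>"
  proof
    fix x assume "x \<in> mesh_vertices \<T>"
    then obtain T where "T \<in> \<T>" "x \<in> T" unfolding mesh_vertices_def by blast
    then show "x \<in> closure \<Omega>" using cover hull_inc[of x T] by blast
  qed
  have fr: "frontier \<Omega> = closure \<Omega> - \<Omega>" unfolding frontier_def using omega_open by (simp add: interior_open)
  have un: "internal_vertices \<Omega> \<T> \<union> boundary_vertices \<Omega> \<T> = mesh_vertices \<T>"
    unfolding internal_vertices_def boundary_vertices_def fr using sub by blast
  have dj: "internal_vertices \<Omega> \<T> \<inter> boundary_vertices \<Omega> \<T> = {}"
    unfolding internal_vertices_def boundary_vertices_def fr by blast
  have f1: "finite (internal_vertices \<Omega> \<T>)" unfolding internal_vertices_def using V_fin by simp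
  have f2: "finite (boundary_vertices \<Omega> \<T>)" unfolding boundary_vertices_def using V_fin by simp
  show ?thesis using card_Un_disjoint[OF f1 f2 dj] un by simp
qed

end

theorem proposition5:
  fixes \<Omega> :: "pt set" and \<T> :: "pt set set" and ori :: "pt set \<Rightarrow> pt \<times> pt" and \<sigma> :: real
  assumes "polygonal_domain \<Omega>"
    and "conforming_triangulation \<Omega> \<T>"
    and "at_most_one_boundary_edge \<Omega> \<T>"
    and "edge_orientation \<T> ori"
    and "\<sigma> = 1 \<or> \<sigma> = -1"
  shows "vector_space.dim fscale (left_kernel_G \<T> \<sigma> ori)
           = card (internal_vertices \<Omega> \<T>) + card (boundary_vertices \<Omega> \<T>)
       \<and> card (internal_vertices \<Omega> \<T>) + card (boundary_vertices \<Omega> \<T>) = card (mesh_vertices \<T>)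
       \<and> (\<exists>\<phi> :: pt \<Rightarrow> row_idx \<Rightarrow> real.
            (\<forall>p\<in>mesh_vertices \<T>. \<phi> p \<in> left_kernel_G \<T> \<sigma> ori)
          \<and> inj_on \<phi> (mesh_vertices \<T>)
          \<and> \<not> module.dependent fscale (\<phi> ` mesh_vertices \<T>)
          \<and> module.span fscale (\<phi> ` mesh_vertices \<T>) = left_kernel_G \<T> \<sigma> ori)"
proof -
  interpret m: mesh \<Omega> \<T> ori \<sigma> using assms(1,2,4,5) by unfold_locales
  have 1: "vector_space.dim fscale (left_kernel_G \<T> \<sigma> ori) = card (mesh_vertices \<T>)" by (rule m.dim_K)
  have 2: "card (internal_vertices \<Omega> \<T>) + card (boundary_vertices \<Omega> \<T>) = card (mesh_vertices \<T>)" by (rule m.card_split)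
  have 3: "(\<forall>p\<in>mesh_vertices \<T>. m.phi p \<in> left_kernel_G \<T> \<sigma> ori)
          \<and> inj_on m.phi (mesh_vertices \<T>)
          \<and> \<not> module.dependent fscale (m.phi ` mesh_vertices \<T>)
          \<and> module.span fscale (m.phi ` mesh_vertices \<T>) = left_kernel_G \<T> \<sigma> ori"
    using m.phi_prop m.phi_inj m.phi_indep m.phi_span by blast
  show ?thesis using 1 2 3 by metis
qed


end
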